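(* For the model $(\mathcal N,f,r)$ with $f$ the algebraic sum over $\mathbb F_q$, $$\widehat{\mathcal C}(\mathcal N,f,r)\le\min_{W\in\mathcal W'_r}|C^*_W|,$$ and this right-hand side equals $\min\{|C|-|W|:(W,C)\in\mathcal W_r\times\Lambda(\mathcal N),\ W\subseteq C,\ D_W\subseteq I_C\}$, where $\mathcal W'_r=\{W\in\mathcal W_r:W=\widehat W\}$ and $C^*_W$ is the primary minimum cut separating $\rho$ from $D_W$ in the residual graph $\mathcal G_W$.
   Context: Network model: $\mathcal G=(\mathcal V,\mathcal E)$ is a finite directed acyclic graph (multiple edges allowed); $\mathcal E_{\rm in}(u)$ are the input edges of node $u$. $S=\{\sigma_1,\dots,\sigma_s\}$ is the set of source nodes (exactly the nodes without input edges), $\rho\notin S$ the sink (no output edges), every node other than $\rho$ has a directed path to $\rho$; $\mathcal N=(\mathcal G,S,\rho)$. For a node $\sigma$ and edge $e$, $\sigma\to e$ means there is a directed path from $\sigma$ whose last edge is $e$. For $C\subseteq\mathcal E$: $D_C=\{\sigma\in S:\exists e\in C,\ \sigma\to e\}$, $I_C=\{\sigma\in S:$ no path from $\sigma$ to $\rho$ after deleting $C\}$; $\Lambda(\mathcal N)=\{C\subseteq\mathcal E:I_C\neq\emptyset\}$. $\mathcal W_r=\{W\subseteq\mathcal E:|W|\le r\}$. $\mathcal G_W$ is $\mathcal G$ with the edges of $W$ deleted. Cuts: an edge set $C$ separates a node set (resp. edge set) $X$ from a node set $U$ if every path from a node of $U$ to a node (resp. edge) of $X$ uses an edge of $C$ (formally,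 for an edge set $X$ one subdivides each $e\in X$ by a new node $v_e$ into $e^1,e^2$ and identifies $e^1,e^2$ with $e$ in the cut). A minimum cut has minimum size; a minimum cut separating $X$ from $U$ is primary if it separates from $U$ every minimum cut separating $X$ from $U$ (it exists and is unique); for a node $\rho$ this means separating $\mathcal E_{\rm in}(\rho)$. $\widehat W$ is the primary minimum cut separating $W$ from $D_W$. Secure model: $q$ a prime power, $f(m_1,\dots,m_s)=\sum_i m_i$ over $\mathbb F_q$; each edge carries one symbol of $\mathbb F_q$ per use. An $(\ell,n)$ secure network code: source $\sigma_i$ holds $\mathbf M_i\in\mathbb F_q^\ell$ with i.i.d. uniform entries and a key $\mathbf K_i$ uniform on a finite set $\mathcal K_i$; all mutually independent. Each edge out of $\sigma_i$ carries a function of $(\mathbf M_i,\mathbf K_i)$ with values in $\mathbb F_q^n$; every other edge carries a function in $\mathbb F_q^n$ of the messages on the input edges of its tail; a decoder maps messages on $\mathcal E_{\rm in}(\rho)$ to $\mathbb F_q^\ell$. Admissible: decoder outputs $\sum_i\mathbf m_i$ for all messages and keys, and $I(\mathbf Y_W;\mathbf M_S)=0$ for all $W\in\mathcal W_r$ ($\mathbf Y_W$ the messages on $W$, $\mathbf M_S=(\mathbf M_1,\dots,\mathbf M_s)$). Rate $\ell/n$; $R$ achievable if for every $\epsilon>0$ some admissible code has rate $>R-\epsilon$; $\widehat{\mathcal C}(\mathcal N,f,r)$ is the maximum achievable rate. *)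

theory Defs
  imports "HOL-Probability.Probability"
begin

fun is_walk :: "'e set \<Rightarrow> ('e \<Rightarrow> 'v) \<Rightarrow> ('e \<Rightarrow> 'v) \<Rightarrow> 'v \<Rightarrow> 'e list \<Rightarrow> 'v \<Rightarrow> bool" where
  "is_walk Eg tlE hdE u [] v = (u = v)"
| "is_walk Eg tlE hdE u (e # es) v = (e \<in> Eg \<and> tlE e = u \<and> is_walk Eg tlE hdE (hdE e) es v)"

definition in_edges :: "'e set \<Rightarrow> ('e \<Rightarrow> 'v) \<Rightarrow> 'v \<Rightarrow> 'e set" where
  "in_edges Eg hdE u = {e \<in> Eg. hdE e = u}"

definition network :: "'v set \<Rightarrow> 'e set \<Rightarrow> ('e \<Rightarrow> 'v) \<Rightarrow> ('e \<Rightarrow> 'v) \<Rightarrow> 'v set \<Rightarrow> 'v \<Rightarrow> bool" where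
  "network V E tlE hdE S \<rho> \<longleftrightarrow>
     finite V \<and> finite E \<and> (\<forall>e\<in>E. tlE e \<in> V \<and> hdE e \<in> V) \<and>
     (\<forall>v es. is_walk E tlE hdE v es v \<longrightarrow> es = []) \<and>
     S = {v \<in> V. in_edges E hdE v = {}} \<and>
     \<rho> \<in> V \<and> \<rho> \<notin> S \<and> (\<forall>e\<in>E. tlE e \<noteq> \<rho>) \<and>
     (\<forall>v\<in>V - {\<rho>}. \<exists>es. is_walk E tlE hdE v es \<rho>)"

definition reaches_edge :: "'e set \<Rightarrow> ('e \<Rightarrow> 'v) \<Rightarrow> ('e \<Rightarrow> 'v) \<Rightarrow> 'v \<Rightarrow> 'e \<Rightarrow> bool" where
  "reaches_edge E tlE hdE \<sigma> e \<longleftrightarrow> (\<exists>es. es \<noteq> [] \<and> last es = e \<and> is_walk E tlE hdE \<sigma> es (hdE e))"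

definition D_set :: "'e set \<Rightarrow> ('e \<Rightarrow> 'v) \<Rightarrow> ('e \<Rightarrow> 'v) \<Rightarrow> 'v set \<Rightarrow> 'e set \<Rightarrow> 'v set" where
  "D_set E tlE hdE S C = {\<sigma> \<in> S. \<exists>e\<in>C. reaches_edge E tlE hdE \<sigma> e}"

definition I_set :: "'e set \<Rightarrow> ('e \<Rightarrow> 'v) \<Rightarrow> ('e \<Rightarrow> 'v) \<Rightarrow> 'v set \<Rightarrow> 'v \<Rightarrow> 'e set \<Rightarrow> 'v set" where
  "I_set E tlE hdE S \<rho> C = {\<sigma> \<in> S. \<not> (\<exists>es. is_walk (E - C) tlE hdE \<sigma> es \<rho>)}"

definition Lambda_set :: "'e set \<Rightarrow> ('e \<Rightarrow> 'v) \<Rightarrow> ('e \<Rightarrow> 'v) \<Rightarrow> 'v set \<Rightarrow> 'v \<Rightarrow> 'e set set" where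
  "Lambda_set E tlE hdE S \<rho> = {C. C \<subseteq> E \<and> I_set E tlE hdE S \<rho> C \<noteq> {}}"

definition W_r :: "'e set \<Rightarrow> nat \<Rightarrow> 'e set set" where
  "W_r E r = {W. W \<subseteq> E \<and> card W \<le> r}"

definition sep_nodes :: "'e set \<Rightarrow> ('e \<Rightarrow> 'v) \<Rightarrow> ('e \<Rightarrow> 'v) \<Rightarrow> 'e set \<Rightarrow> 'v set \<Rightarrow> 'v set \<Rightarrow> bool" where
  "sep_nodes Eg tlE hdE C X U \<longleftrightarrow>
     (\<forall>u\<in>U. \<forall>x\<in>X. \<forall>es. is_walk Eg tlE hdE u es x \<longrightarrow> set es \<inter> C \<noteq> {})"

text \<open>C separates the edge set X from the node set U (via the subdivision of the
  edges of X: a path to the subdividing node of e is a path whose last edge is e).\<close>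
definition sep_edges :: "'e set \<Rightarrow> ('e \<Rightarrow> 'v) \<Rightarrow> ('e \<Rightarrow> 'v) \<Rightarrow> 'e set \<Rightarrow> 'e set \<Rightarrow> 'v set \<Rightarrow> bool" where
  "sep_edges Eg tlE hdE C X U \<longleftrightarrow>
     (\<forall>u\<in>U. \<forall>es. es \<noteq> [] \<longrightarrow> last es \<in> X \<longrightarrow> is_walk Eg tlE hdE u es (hdE (last es))
        \<longrightarrow> set es \<inter> C \<noteq> {})"

definition min_cut_edges :: "'e set \<Rightarrow> ('e \<Rightarrow> 'v) \<Rightarrow> ('e \<Rightarrow> 'v) \<Rightarrow> 'e set \<Rightarrow> 'e set \<Rightarrow> 'v set \<Rightarrow> bool" where
  "min_cut_edges Eg tlE hdE C X U \<longleftrightarrow> C \<subseteq> Eg \<and> sep_edges Eg tlE hdE C X U \<and>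
     (\<forall>C'. C' \<subseteq> Eg \<longrightarrow> sep_edges Eg tlE hdE C' X U \<longrightarrow> card C \<le> card C')"

definition primary_cut_edges :: "'e set \<Rightarrow> ('e \<Rightarrow> 'v) \<Rightarrow> ('e \<Rightarrow> 'v) \<Rightarrow> 'e set \<Rightarrow> 'e set \<Rightarrow> 'v set \<Rightarrow> bool" where
  "primary_cut_edges Eg tlE hdE C X U \<longleftrightarrow> min_cut_edges Eg tlE hdE C X U \<and>
     (\<forall>C'. min_cut_edges Eg tlE hdE C' X U \<longrightarrow> sep_edges Eg tlE hdE C C' U)"

definition min_cut_nodes :: "'e set \<Rightarrow> ('e \<Rightarrow> 'v) \<Rightarrow> ('e \<Rightarrow> 'v) \<Rightarrow> 'e set \<Rightarrow> 'v set \<Rightarrow> 'v set \<Rightarrow> bool" where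
  "min_cut_nodes Eg tlE hdE C X U \<longleftrightarrow> C \<subseteq> Eg \<and> sep_nodes Eg tlE hdE C X U \<and>
     (\<forall>C'. C' \<subseteq> Eg \<longrightarrow> sep_nodes Eg tlE hdE C' X U \<longrightarrow> card C \<le> card C')"

definition primary_cut_nodes :: "'e set \<Rightarrow> ('e \<Rightarrow> 'v) \<Rightarrow> ('e \<Rightarrow> 'v) \<Rightarrow> 'e set \<Rightarrow> 'v set \<Rightarrow> 'v set \<Rightarrow> bool" where
  "primary_cut_nodes Eg tlE hdE C X U \<longleftrightarrow> min_cut_nodes Eg tlE hdE C X U \<and>
     (\<forall>C'. min_cut_nodes Eg tlE hdE C' X U \<longrightarrow> sep_edges Eg tlE hdE C C' U)"

definition W_hat :: "'e set \<Rightarrow> ('e \<Rightarrow> 'v) \<Rightarrow> ('e \<Rightarrow> 'v) \<Rightarrow> 'v set \<Rightarrow> 'e set \<Rightarrow> 'e set" where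
  "W_hat E tlE hdE S W = (THE C. primary_cut_edges E tlE hdE C W (D_set E tlE hdE S W))"

definition C_star :: "'e set \<Rightarrow> ('e \<Rightarrow> 'v) \<Rightarrow> ('e \<Rightarrow> 'v) \<Rightarrow> 'v set \<Rightarrow> 'v \<Rightarrow> 'e set \<Rightarrow> 'e set" where
  "C_star E tlE hdE S \<rho> W = (THE C. primary_cut_nodes (E - W) tlE hdE C {\<rho>} (D_set E tlE hdE S W))"

text \<open>W'_r (nonempty W only).\<close>
definition W'_r :: "'e set \<Rightarrow> ('e \<Rightarrow> 'v) \<Rightarrow> ('e \<Rightarrow> 'v) \<Rightarrow> 'v set \<Rightarrow> nat \<Rightarrow> 'e set set" where
  "W'_r E tlE hdE S r = {W \<in> W_r E r. W \<noteq> {} \<and> W = W_hat E tlE hdE S W}"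

definition vec_sum :: "nat \<Rightarrow> 'v set \<Rightarrow> ('v \<Rightarrow> 'f::field list) \<Rightarrow> 'f list" where
  "vec_sum l S m = map (\<lambda>j. \<Sum>\<sigma>\<in>S. m \<sigma> ! j) [0..<l]"

text \<open>The uniform
  distribution on this finite set makes all message entries i.i.d. uniform, each key
  uniform on its key set, and all of them mutually independent.\<close>
definition sample_space :: "'v set \<Rightarrow> ('v \<Rightarrow> nat set) \<Rightarrow> nat \<Rightarrow> (('v \<Rightarrow> 'f list) \<times> ('v \<Rightarrow> nat)) set" where
  "sample_space S K l = {(m, k). (\<forall>\<sigma>\<in>S. length (m \<sigma>) = l \<and> k \<sigma> \<in> K \<sigma>) \<and>
                                (\<forall>v. v \<notin> S \<longrightarrow> m v = [] \<and> k v = 0)}"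

text \<open>K: key sets; enc e: local encoding
  function of an edge e out of a source (function of that source's message and key);
  phi e: local encoding function of any other edge (function of the messages on the
  input edges of its tail); psi: decoding function (function of the messages on the
  input edges of rho); y e: the resulting global message on edge e as a function of all
  messages and keys.\<close>
definition admissible_code ::
  "'e set \<Rightarrow> ('e \<Rightarrow> 'v) \<Rightarrow> ('e \<Rightarrow> 'v) \<Rightarrow> 'v set \<Rightarrow> 'v \<Rightarrow> nat \<Rightarrow> 'f::{finite,field} itself \<Rightarrow> nat \<Rightarrow> nat \<Rightarrow> bool" where
  "admissible_code E tlE hdE S \<rho> r F l n \<longleftrightarrow>
     0 < l \<and> 0 < n \<and>
     (\<exists>(K :: 'v \<Rightarrow> nat set) (enc :: 'e \<Rightarrow> 'f list \<Rightarrow> nat \<Rightarrow> 'f list)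
        (phi :: 'e \<Rightarrow> ('e \<Rightarrow> 'f list) \<Rightarrow> 'f list) (psi :: ('e \<Rightarrow> 'f list) \<Rightarrow> 'f list)
        (y :: 'e \<Rightarrow> ('v \<Rightarrow> 'f list) \<times> ('v \<Rightarrow> nat) \<Rightarrow> 'f list).
        let \<Omega> = sample_space S K l in
        (\<forall>\<sigma>\<in>S. finite (K \<sigma>) \<and> K \<sigma> \<noteq> {}) \<and>
        (\<forall>\<omega>\<in>\<Omega>. \<forall>e\<in>E. tlE e \<in> S \<longrightarrow> y e \<omega> = enc e (fst \<omega> (tlE e)) (snd \<omega> (tlE e))) \<and>
        (\<forall>\<omega>\<in>\<Omega>. \<forall>e\<in>E. tlE e \<notin> S \<longrightarrow>
            y e \<omega> = phi e (\<lambda>d. if d \<in> in_edges E hdE (tlE e) then y d \<omega> else [])) \<and>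
        (\<forall>\<omega>\<in>\<Omega>. \<forall>e\<in>E. length (y e \<omega>) = n) \<and>
        (\<forall>\<omega>\<in>\<Omega>. psi (\<lambda>d. if d \<in> in_edges E hdE \<rho> then y d \<omega> else []) = vec_sum l S (fst \<omega>)) \<and>
        (\<forall>W\<in>W_r E r.
           prob_space.mutual_information (measure_pmf (pmf_of_set \<Omega>)) 2 (count_space UNIV) (count_space UNIV)
             (\<lambda>\<omega>. \<lambda>e. if e \<in> W then y e \<omega> else []) (\<lambda>\<omega>. fst \<omega>) = 0))"

definition achievable_rate ::
  "'e set \<Rightarrow> ('e \<Rightarrow> 'v) \<Rightarrow> ('e \<Rightarrow> 'v) \<Rightarrow> 'v set \<Rightarrow> 'v \<Rightarrow> nat \<Rightarrow> 'f::{finite,field} itself \<Rightarrow> real \<Rightarrow> bool" where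
  "achievable_rate E tlE hdE S \<rho> r F R \<longleftrightarrow>
     (\<forall>\<epsilon>>0. \<exists>l n. admissible_code E tlE hdE S \<rho> r F l n \<and> real l / real n > R - \<epsilon>)"

end

theory Submission
  imports Defs
begin

lemma is_walk_append:
  "is_walk Eg t h u (xs @ ys) v \<longleftrightarrow> (\<exists>w. is_walk Eg t h u xs w \<and> is_walk Eg t h w ys v)"
  by (induction xs arbitrary: u) auto

lemma is_walk_last: "is_walk Eg t h u es v \<Longrightarrow> es \<noteq> [] \<Longrightarrow> v = h (last es)"
  by (induction es arbitrary: u) (auto split: if_splits)

lemma is_walk_set: "is_walk Eg t h u es v \<Longrightarrow> set es \<subseteq> Eg"
  by (induction es arbitrary: u) auto

lemma is_walk_mono: "is_walk Eg t h u es v \<Longrightarrow> set es \<subseteq> Eg' \<Longrightarrow> is_walk Eg' t h u es v"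
  by (induction es arbitrary: u) auto

lemma is_walk_snoc: "is_walk Eg t h u (xs @ [e]) v \<longleftrightarrow> is_walk Eg t h u xs (t e) \<and> e \<in> Eg \<and> v = h e"
  by (auto simp: is_walk_append)


locale cutg =
  fixes Eg :: "'e set" and t h :: "'e \<Rightarrow> 'v"
  assumes finE: "finite Eg"
begin

abbreviation "sep C X U \<equiv> sep_edges Eg t h C X U"
abbreviation "mincut C X U \<equiv> min_cut_edges Eg t h C X U"
abbreviation "primary C X U \<equiv> primary_cut_edges Eg t h C X U"

lemma sepD: "sep C X U \<Longrightarrow> u \<in> U \<Longrightarrow> is_walk Eg t h u (as @ [e]) (h e) \<Longrightarrow> e \<in> X \<Longrightarrow> set (as @ [e]) \<inter> C \<noteq> {}"
  unfolding sep_edges_def by (metis last_snoc snoc_eq_iff_butlast)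

lemma sepI: "(\<And>u as e. u \<in> U \<Longrightarrow> is_walk Eg t h u (as @ [e]) (h e) \<Longrightarrow> e \<in> X \<Longrightarrow> set (as @ [e]) \<inter> C \<noteq> {}) \<Longrightarrow> sep C X U"
  unfolding sep_edges_def by (metis append_butlast_last_id)

lemma first_hit:
  assumes "is_walk Eg t h u es v" "set es \<inter> Z \<noteq> {}"
  shows "\<exists>as c bs. es = as @ c # bs \<and> c \<in> Z \<and> set as \<inter> Z = {} \<and> is_walk Eg t h u (as @ [c]) (h c)
          \<and> is_walk Eg t h (h c) bs v"
proof -
  from assms(2) obtain as c bs where es: "es = as @ c # bs" "c \<in> Z" "\<forall>y\<in>set as. y \<notin> Z"
    using split_list_first_prop[of es "\<lambda>x. x \<in> Z"] by blast
  with assms(1) show ?thesis by (auto simp: is_walk_append)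
qed

lemma last_hit:
  assumes "is_walk Eg t h u es v" "set es \<inter> Z \<noteq> {}"
  shows "\<exists>as c bs. es = as @ c # bs \<and> c \<in> Z \<and> set bs \<inter> Z = {} \<and> is_walk Eg t h u (as @ [c]) (h c)
          \<and> is_walk Eg t h (h c) bs v"
proof -
  from assms(2) obtain as c bs where es: "es = as @ c # bs" "c \<in> Z" "\<forall>y\<in>set bs. y \<notin> Z"
    using split_list_last_prop[of es "\<lambda>x. x \<in> Z"] by blast
  with assms(1) show ?thesis by (auto simp: is_walk_append)
qed

lemma sep_Eg: "sep Eg X U"
  by (rule sepI) (auto dest: is_walk_set)

lemma sep_self: "sep X X U"
  by (rule sepI) auto

lemma mincut_ex: "\<exists>C. mincut C X U"
proof -
  define k where "k = (LEAST k. \<exists>C. C \<subseteq> Eg \<and> sep C X U \<and> card C = k)"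
  have ex: "\<exists>k C. C \<subseteq> Eg \<and> sep C X U \<and> card C = k" using sep_Eg by blast
  then obtain C where C: "C \<subseteq> Eg" "sep C X U" "card C = k"
    unfolding k_def using LeastI_ex[where P="\<lambda>k. \<exists>C. C \<subseteq> Eg \<and> sep C X U \<and> card C = k"] by blast
  have "card C \<le> card C'" if "C' \<subseteq> Eg" "sep C' X U" for C'
    using C(3) that unfolding k_def by (metis (mono_tags, lifting) Least_le)
  with C show ?thesis unfolding min_cut_edges_def by blast
qed

definition meet where
  "meet U P Q = {e \<in> P \<union> Q. \<exists>u\<in>U. \<exists>as. is_walk Eg t h u (as @ [e]) (h e) \<and> set as \<inter> (P \<union> Q) = {}}"

definition jn where
  "jn U P Q = (P \<inter> Q) \<union> {e \<in> P - Q. \<forall>u\<in>U. \<forall>as. is_walk Eg t h u (as @ [e]) (h e) \<longrightarrow> set as \<inter> Q \<noteq> {}}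
     \<union> {e \<in> Q - P. \<forall>u\<in>U. \<forall>as. is_walk Eg t h u (as @ [e]) (h e) \<longrightarrow> set as \<inter> P \<noteq> {}}"

lemma meet_sep:
  assumes "set es \<inter> (P \<union> Q) \<noteq> {}" "u \<in> U" "is_walk Eg t h u es v"
  shows "set es \<inter> meet U P Q \<noteq> {}"
proof -
  obtain as c bs where "es = as @ c # bs" "c \<in> P \<union> Q" "set as \<inter> (P \<union> Q) = {}" "is_walk Eg t h u (as @ [c]) (h c)"
    using first_hit[OF assms(3,1)] by blast
  then show ?thesis unfolding meet_def using assms(2) by auto
qed

lemma meet_sepX: "sep P X U \<Longrightarrow> sep (meet U P Q) X U"
  apply (rule sepI)
  subgoal for u as e
    using sepD[of P X U u as e] meet_sep[where P=P and U=U and es="as@[e]" and Q=Q and u=u and v="h e"] by blast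
  done

lemma meet_sepP: "sep (meet U P Q) P U" "sep (meet U P Q) Q U"
   apply (rule sepI)
  subgoal for u as e using meet_sep[where P=P and U=U and es="as@[e]" and Q=Q and u=u and v="h e"] by auto
   apply (rule sepI)
  subgoal for u as e using meet_sep[where P=P and U=U and es="as@[e]" and Q=Q and u=u and v="h e"] by auto
  done

lemma join_sepX:
  assumes P: "sep P X U" and Q: "sep Q X U"
  shows "sep (jn U P Q) X U"
proof (rule sepI)
  fix u as e assume u: "u \<in> U" and w: "is_walk Eg t h u (as @ [e]) (h e)" and e: "e \<in> X"
  have "set (as @ [e]) \<inter> P \<noteq> {}" using sepD[OF P u w e] .
  then have "set (as @ [e]) \<inter> (P \<union> Q) \<noteq> {}" by blast
  then obtain as' c bs where es: "as @ [e] = as' @ c # bs" "c \<in> P \<union> Q" "set bs \<inter> (P \<union> Q) = {}"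
     "is_walk Eg t h (h c) bs (h e)"
    using last_hit[OF w] by blast
  have "last (as' @ c # bs) = e" unfolding es(1)[symmetric] by simp
  then have lst: "last (c # bs) = e" by simp
  define bs' where "bs' = butlast (c # bs)"
  have cbs: "c # bs = bs' @ [e]" unfolding bs'_def using lst append_butlast_last_id[of "c#bs"] by simp
  have key: "set (as'' @ c # bs) \<inter> Z \<noteq> {}" if Z: "sep Z X U" and "u' \<in> U" "is_walk Eg t h u' (as'' @ [c]) (h c)" for Z u' as''
  proof -
    have "is_walk Eg t h u' (as'' @ c # bs) (h e)" using that(3) es(4) by (auto simp: is_walk_append)
    then have "is_walk Eg t h u' ((as'' @ bs') @ [e]) (h e)" using cbs by (simp add: is_walk_append)
    from sepD[OF Z that(2) this e] show ?thesis using cbs by simp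
  qed
  have "c \<in> jn U P Q"
  proof -
    { assume cP: "c \<in> P" "c \<notin> Q"
      have H: "set as'' \<inter> Q \<noteq> {}" if "u' \<in> U" "is_walk Eg t h u' (as'' @ [c]) (h c)" for u' as''
        using key[OF Q that] cP es(3) by auto
      have "c \<in> {e \<in> P - Q. \<forall>u\<in>U. \<forall>as. is_walk Eg t h u (as @ [e]) (h e) \<longrightarrow> set as \<inter> Q \<noteq> {}}"
        using cP H by blast
      then have ?thesis unfolding jn_def by (rule UnI1[OF UnI2]) }
    moreover
    { assume cQ: "c \<in> Q" "c \<notin> P"
      have H: "set as'' \<inter> P \<noteq> {}" if "u' \<in> U" "is_walk Eg t h u' (as'' @ [c]) (h c)" for u' as''
        using key[OF P that] cQ es(3) by auto
      have "c \<in> {e \<in> Q - P. \<forall>u\<in>U. \<forall>as. is_walk Eg t h u (as @ [e]) (h e) \<longrightarrow> set as \<inter> P \<noteq> {}}"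
        using cQ H by blast
      then have ?thesis unfolding jn_def by (rule UnI2) }
    moreover
    { assume "c \<in> P" "c \<in> Q" then have "c \<in> P \<inter> Q" by (rule IntI)
      then have ?thesis unfolding jn_def by (rule UnI1[OF UnI1]) }
    ultimately show ?thesis using es(2) by blast
  qed
  moreover have "c \<in> set (as @ [e])" unfolding es(1) by simp
  ultimately have "c \<in> set (as @ [e]) \<inter> jn U P Q" by (intro IntI)
  then show "set (as @ [e]) \<inter> jn U P Q \<noteq> {}" by (metis equals0D)
qed

lemma meet_join_card:
  assumes "P \<subseteq> Eg" "Q \<subseteq> Eg"
  shows "card (meet U P Q) + card (jn U P Q) \<le> card P + card Q"
proof -
  have fin: "finite P" "finite Q" using assms finE finite_subset by auto
  have "meet U P Q \<subseteq> P \<union> Q" unfolding meet_def by (rule Collect_restrict)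
  moreover have "jn U P Q \<subseteq> P \<union> Q" unfolding jn_def by blast
  ultimately have s1: "meet U P Q \<union> jn U P Q \<subseteq> P \<union> Q" by blast
  have s2: "meet U P Q \<inter> jn U P Q \<subseteq> P \<inter> Q"
  proof
    fix e assume "e \<in> meet U P Q \<inter> jn U P Q"
    then have m: "e \<in> meet U P Q" and j: "e \<in> jn U P Q" by auto
    from m obtain u as where u: "u\<in>U" "is_walk Eg t h u (as @ [e]) (h e)" "set as \<inter> (P \<union> Q) = {}"
      unfolding meet_def by blast
    have n1: "\<not> (\<forall>u\<in>U. \<forall>as. is_walk Eg t h u (as @ [e]) (h e) \<longrightarrow> set as \<inter> Q \<noteq> {})"
      using u by blast
    have n2: "\<not> (\<forall>u\<in>U. \<forall>as. is_walk Eg t h u (as @ [e]) (h e) \<longrightarrow> set as \<inter> P \<noteq> {})"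
      using u by blast
    from j n1 n2 show "e \<in> P \<inter> Q" unfolding jn_def by blast
  qed
  have "card (meet U P Q) + card (jn U P Q) = card (meet U P Q \<union> jn U P Q) + card (meet U P Q \<inter> jn U P Q)"
  proof -
    have fPQ: "finite (P \<union> Q)" using fin by simp
    have "finite (meet U P Q)" "finite (jn U P Q)" using finite_subset[OF _ fPQ] s1 by auto
    then show ?thesis by (rule card_Un_Int)
  qed
  also have "\<dots> \<le> card (P \<union> Q) + card (P \<inter> Q)"
  proof (rule add_mono)
    show "card (meet U P Q \<union> jn U P Q) \<le> card (P \<union> Q)" using s1 fin by (simp add: card_mono)
    show "card (meet U P Q \<inter> jn U P Q) \<le> card (P \<inter> Q)" using s2 fin by (simp add: card_mono)
  qed
  also have "\<dots> = card P + card Q" by (rule card_Un_Int[OF fin, symmetric])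
  finally show ?thesis .
qed

lemma mincutD: "mincut P X U \<Longrightarrow> P \<subseteq> Eg" "mincut P X U \<Longrightarrow> sep P X U"
  "mincut P X U \<Longrightarrow> C \<subseteq> Eg \<Longrightarrow> sep C X U \<Longrightarrow> card P \<le> card C"
  unfolding min_cut_edges_def by blast+

lemma mincutI: "P \<subseteq> Eg \<Longrightarrow> sep P X U \<Longrightarrow> (\<And>C. C \<subseteq> Eg \<Longrightarrow> sep C X U \<Longrightarrow> card P \<le> card C) \<Longrightarrow> mincut P X U"
  unfolding min_cut_edges_def by blast

lemma meet_mincut:
  assumes "mincut P X U" "mincut Q X U"
  shows "mincut (meet U P Q) X U"
proof -
  have P: "P \<subseteq> Eg" "sep P X U" and Q: "Q \<subseteq> Eg" "sep Q X U"
    using assms mincutD by auto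
  have "meet U P Q \<subseteq> P \<union> Q" unfolding meet_def by (rule Collect_restrict)
  moreover have "jn U P Q \<subseteq> P \<union> Q" unfolding jn_def by blast
  ultimately have ms: "meet U P Q \<subseteq> Eg" "jn U P Q \<subseteq> Eg" using P Q by auto
  have "card P \<le> card (jn U P Q)" "card P \<le> card Q" "card Q \<le> card P"
    using mincutD(3)[OF assms(1) ms(2) join_sepX[OF P(2) Q(2)]] mincutD(3)[OF assms(1) Q]  mincutD(3)[OF assms(2) P] by auto
  then have "card (meet U P Q) \<le> card P" using meet_join_card[OF P(1) Q(1), of U] by linarith
  show ?thesis
  proof (rule mincutI[OF ms(1) meet_sepX[OF P(2)]])
    fix C assume C: "C \<subseteq> Eg" "sep C X U"
    show "card (meet U P Q) \<le> card C" using mincutD(3)[OF assms(1) C] \<open>card (meet U P Q) \<le> card P\<close> by linarith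
  qed
qed

end

context cutg begin

definition Av where
  "Av U P = {e. \<exists>u\<in>U. \<exists>as. is_walk Eg t h u (as @ [e]) (h e) \<and> set (as @ [e]) \<inter> P = {}}"

lemma Av_sub: "Av U P \<subseteq> Eg"
  unfolding Av_def by (auto dest!: is_walk_set)

lemma Av_fin: "finite (Av U P)"
  using Av_sub finE finite_subset by blast

lemma Av_meet: "Av U (meet U P Q) \<subseteq> Av U P"
proof
  fix e assume "e \<in> Av U (meet U P Q)"
  then obtain u as where u: "u \<in> U" "is_walk Eg t h u (as @ [e]) (h e)" "set (as @ [e]) \<inter> meet U P Q = {}"
    unfolding Av_def by blast
  have "set (as @ [e]) \<inter> P = {}"
  proof (rule ccontr)
    assume "set (as @ [e]) \<inter> P \<noteq> {}"
    then have "set (as @ [e]) \<inter> (P \<union> Q) \<noteq> {}" by blast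
    from meet_sep[OF this u(1,2)] u(3) show False by blast
  qed
  with u show "e \<in> Av U P" unfolding Av_def by blast
qed

lemma primary_ex: "\<exists>C. primary C X U"
proof -
  have ex: "\<exists>k C. mincut C X U \<and> card (Av U C) = k" using mincut_ex by blast
  define k where "k = (LEAST k. \<exists>C. mincut C X U \<and> card (Av U C) = k)"
  obtain P where P: "mincut P X U" "card (Av U P) = k"
    unfolding k_def using LeastI_ex[where P="\<lambda>k. \<exists>C. mincut C X U \<and> card (Av U C) = k"] ex by blast
  have Pmin: "card (Av U P) \<le> card (Av U C)" if "mincut C X U" for C
    using P(2) that unfolding k_def by (metis (mono_tags, lifting) Least_le)
  have "sep P Q U" if Q: "mincut Q X U" for Q
  proof -
    have M: "mincut (meet U P Q) X U" by (rule meet_mincut[OF P(1) Q])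
    have "Av U (meet U P Q) = Av U P"
    proof (rule card_subset_eq[OF Av_fin Av_meet])
      show "card (Av U (meet U P Q)) = card (Av U P)"
        using Pmin[OF M] card_mono[OF Av_fin Av_meet[where U=U and P=P and Q=Q]] by linarith
    qed
    show ?thesis
    proof (rule sepI)
      fix u as e assume u: "u \<in> U" and w: "is_walk Eg t h u (as @ [e]) (h e)" and e: "e \<in> Q"
      show "set (as @ [e]) \<inter> P \<noteq> {}"
      proof
        assume "set (as @ [e]) \<inter> P = {}"
        then have "e \<in> Av U P" unfolding Av_def using u w by blast
        then have "e \<in> Av U (meet U P Q)" using \<open>Av U (meet U P Q) = Av U P\<close> by simp
        then obtain u' as' where u': "u' \<in> U" "is_walk Eg t h u' (as' @ [e]) (h e)" "set (as' @ [e]) \<inter> meet U P Q = {}"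
          unfolding Av_def by blast
        from sepD[OF meet_sepP(2) u'(1,2) e] u'(3) show False by blast
      qed
    qed
  qed
  then have "primary P X U" using P(1) unfolding primary_cut_edges_def by blast
  then show ?thesis by blast
qed

lemma essential:
  assumes P: "mincut P X U" and e: "e \<in> P"
  shows "\<exists>u\<in>U. \<exists>as. is_walk Eg t h u (as @ [e]) (h e) \<and> set as \<inter> P = {}"
proof (rule ccontr)
  assume no: "\<not> ?thesis"
  have "sep (P - {e}) X U"
  proof (rule sepI)
    fix u as x assume u: "u \<in> U" and w: "is_walk Eg t h u (as @ [x]) (h x)" and x: "x \<in> X"
    have "set (as @ [x]) \<inter> P \<noteq> {}" using sepD[OF mincutD(2)[OF P] u w x] .
    then obtain as' c bs where es: "as @ [x] = as' @ c # bs" "c \<in> P" "set as' \<inter> P = {}" "is_walk Eg t h u (as' @ [c]) (h c)"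
      using first_hit[OF w] by blast
    have "c \<noteq> e" using no u es(3,4) by blast
    moreover have "c \<in> set (as @ [x])" unfolding es(1) by simp
    ultimately show "set (as @ [x]) \<inter> (P - {e}) \<noteq> {}" using es(2) by blast
  qed
  moreover have "P - {e} \<subseteq> Eg" using mincutD(1)[OF P] by blast
  ultimately have "card P \<le> card (P - {e})" using mincutD(3)[OF P] by blast
  moreover have "finite P" using mincutD(1)[OF P] finE finite_subset by blast
  moreover have "card (P - {e}) < card P" using card_Diff1_less[OF \<open>finite P\<close> e] .
  ultimately show False by linarith
qed

lemma primaryD: "primary C X U \<Longrightarrow> mincut C X U" "primary C X U \<Longrightarrow> mincut C' X U \<Longrightarrow> sep C C' U"
  unfolding primary_cut_edges_def by blast+

lemma primary_unique:
  assumes P1: "primary P1 X U" and P2: "primary P2 X U"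
  shows "P1 = P2"
proof -
  have sub: "A \<subseteq> B" if A: "primary A X U" and B: "primary B X U" for A B
  proof
    fix e assume e: "e \<in> A"
    obtain u as where u: "u \<in> U" "is_walk Eg t h u (as @ [e]) (h e)" "set as \<inter> A = {}"
      using essential[OF primaryD(1)[OF A] e] by blast
    have BA: "sep B A U" using primaryD(2)[OF B primaryD(1)[OF A]] .
    have AB: "sep A B U" using primaryD(2)[OF A primaryD(1)[OF B]] .
    have hit: "set (as @ [e]) \<inter> B \<noteq> {}" using sepD[OF BA u(1,2) e] .
    show "e \<in> B"
    proof (rule ccontr)
      assume "e \<notin> B"
      with hit obtain z where z: "z \<in> set as" "z \<in> B" by auto
      then obtain as1 as2 where as: "as = as1 @ z # as2" by (meson split_list)
      have "is_walk Eg t h u (as1 @ [z]) (h z)" using u(2) unfolding as by (auto simp: is_walk_append)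
      from sepD[OF AB u(1) this z(2)] u(3) show False unfolding as by auto
    qed
  qed
  show ?thesis using sub[OF P1 P2] sub[OF P2 P1] by blast
qed

lemma primary_the: "primary C X U \<Longrightarrow> (THE C. primary C X U) = C"
  apply (rule the_equality)
   apply assumption
  apply (rule primary_unique)
   apply assumption+
  done

lemma sep_nodes_iff:
  assumes "\<rho> \<notin> U"
  shows "sep_nodes Eg t h C {\<rho>} U \<longleftrightarrow> sep C (in_edges Eg h \<rho>) U"
proof
  assume L: "sep_nodes Eg t h C {\<rho>} U"
  show "sep C (in_edges Eg h \<rho>) U"
  proof (rule sepI)
    fix u as e assume u: "u \<in> U" and w: "is_walk Eg t h u (as @ [e]) (h e)" and "e \<in> in_edges Eg h \<rho>"
    then have "h e = \<rho>" unfolding in_edges_def by auto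
    moreover have "\<forall>u\<in>U. \<forall>x\<in>{\<rho>}. \<forall>es. is_walk Eg t h u es x \<longrightarrow> set es \<inter> C \<noteq> {}"
      using L unfolding sep_nodes_def .
    ultimately show "set (as @ [e]) \<inter> C \<noteq> {}" using u w by blast
  qed
next
  assume R: "sep C (in_edges Eg h \<rho>) U"
  show "sep_nodes Eg t h C {\<rho>} U"
    unfolding sep_nodes_def
  proof (intro ballI allI impI)
    fix u x es assume u: "u \<in> U" and x: "x \<in> {\<rho>}" and w: "is_walk Eg t h u es x"
    have "es \<noteq> []" using w u x assms by auto
    then obtain as e where es: "es = as @ [e]" by (metis append_butlast_last_id)
    have "e \<in> Eg" "h e = \<rho>" using w x unfolding es by (auto simp: is_walk_append)
    then have "e \<in> in_edges Eg h \<rho>" "is_walk Eg t h u (as @ [e]) (h e)" using w x unfolding es in_edges_def by auto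
    from sepD[OF R u this(2) this(1)] show "set es \<inter> C \<noteq> {}" unfolding es .
  qed
qed

lemma primary_nodes_iff:
  assumes "\<rho> \<notin> U"
  shows "primary_cut_nodes Eg t h C {\<rho>} U \<longleftrightarrow> primary C (in_edges Eg h \<rho>) U"
  unfolding primary_cut_nodes_def primary_cut_edges_def min_cut_nodes_def min_cut_edges_def
    sep_nodes_iff[OF assms] ..

end

context cutg begin

lemma sep_trans:
  assumes CP: "sep C P U" and PX: "sep P X U"
  shows "sep C X U"
proof (rule sepI)
  fix u as e assume u: "u \<in> U" and w: "is_walk Eg t h u (as @ [e]) (h e)" and e: "e \<in> X"
  have "set (as @ [e]) \<inter> P \<noteq> {}" using sepD[OF PX u w e] .
  then obtain as' c bs where es: "as @ [e] = as' @ c # bs" "c \<in> P" "is_walk Eg t h u (as' @ [c]) (h c)"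
    using first_hit[OF w] by blast
  have "set (as' @ [c]) \<inter> C \<noteq> {}" using sepD[OF CP u es(3) es(2)] .
  moreover have "set (as' @ [c]) \<subseteq> set (as @ [e])" unfolding es(1) by auto
  ultimately show "set (as @ [e]) \<inter> C \<noteq> {}" by blast
qed

lemma essential_fwd:
  assumes P: "mincut P X U" and p: "p \<in> P"
  shows "\<exists>bs. last (p # bs) \<in> X \<and> is_walk Eg t h (h p) bs (h (last (p # bs)))"
proof (rule ccontr)
  assume no: "\<not> ?thesis"
  have "sep (P - {p}) X U"
  proof (rule sepI)
    fix u as x assume u: "u \<in> U" and w: "is_walk Eg t h u (as @ [x]) (h x)" and x: "x \<in> X"
    have hit: "set (as @ [x]) \<inter> P \<noteq> {}" using sepD[OF mincutD(2)[OF P] u w x] .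
    have "p \<notin> set (as @ [x])"
    proof
      assume "p \<in> set (as @ [x])"
      then obtain as1 bs where sp: "as @ [x] = as1 @ p # bs" by (meson split_list)
      have "last (p # bs) = x"
      proof -
        have "last (as1 @ p # bs) = x" unfolding sp[symmetric] by simp
        then show ?thesis by simp
      qed
      moreover have "is_walk Eg t h (h p) bs (h x)" using w unfolding sp by (auto simp: is_walk_append)
      ultimately show False using no x by metis
    qed
    with hit show "set (as @ [x]) \<inter> (P - {p}) \<noteq> {}" by blast
  qed
  moreover have "P - {p} \<subseteq> Eg" using mincutD(1)[OF P] by blast
  ultimately have "card P \<le> card (P - {p})" using mincutD(3)[OF P] by blast
  moreover have "finite P" using mincutD(1)[OF P] finE finite_subset by blast
  moreover have "card (P - {p}) < card P" using card_Diff1_less[OF \<open>finite P\<close> p] .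
  ultimately show False by linarith
qed

end

lemma cutg_sub: "finite E \<Longrightarrow> cutg (E - W)"
  unfolding cutg_def by simp

locale netw =
  fixes V :: "'v set" and E :: "'e set" and tlE hdE :: "'e \<Rightarrow> 'v" and S :: "'v set" and \<rho> :: 'v
  assumes net: "network V E tlE hdE S \<rho>"
begin

lemma finE: "finite E" and tlV: "e \<in> E \<Longrightarrow> tlE e \<in> V" and hdV: "e \<in> E \<Longrightarrow> hdE e \<in> V"
  and acyc: "is_walk E tlE hdE v es v \<Longrightarrow> es = []"
  and S_eq: "S = {v \<in> V. in_edges E hdE v = {}}"
  and rhoV: "\<rho> \<in> V" and rhoS: "\<rho> \<notin> S" and rho_out: "e \<in> E \<Longrightarrow> tlE e \<noteq> \<rho>"
  and to_rho: "v \<in> V - {\<rho>} \<Longrightarrow> \<exists>es. is_walk E tlE hdE v es \<rho>"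
  using net unfolding network_def by auto

sublocale cutg E tlE hdE using finE by unfold_locales

lemma walk_distinct: "is_walk E tlE hdE u es v \<Longrightarrow> distinct es"
proof (rule ccontr)
  assume w: "is_walk E tlE hdE u es v" and "\<not> distinct es"
  then obtain xs ys zs y where es: "es = xs @ [y] @ ys @ [y] @ zs" using not_distinct_decomp by blast
  from w obtain w1 where "is_walk E tlE hdE w1 ([y] @ ys @ [y] @ zs) v" unfolding es by (auto simp: is_walk_append)
  then have "is_walk E tlE hdE (tlE y) (y # ys) (tlE y)" by (auto simp: is_walk_append)
  from acyc[OF this] show False by simp
qed

lemma walk_length: "is_walk E tlE hdE u es v \<Longrightarrow> length es \<le> card E"
  using walk_distinct[of u es v] distinct_card[of es] card_mono[OF finE is_walk_set] by fastforce

lemma back_to_source: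
  "is_walk E tlE hdE v es x \<Longrightarrow> card E - length es \<le> k \<Longrightarrow> v \<in> V \<Longrightarrow> \<exists>\<sigma>\<in>S. \<exists>as. is_walk E tlE hdE \<sigma> (as @ es) x"
proof (induction k arbitrary: v es)
  case 0
  show ?case
  proof (cases "v \<in> S")
    case True then show ?thesis using "0.prems" by (metis append.left_neutral)
  next
    case False
    then obtain d where d: "d \<in> E" "hdE d = v" using S_eq "0.prems"(3) unfolding in_edges_def by blast
    then have "is_walk E tlE hdE (tlE d) (d # es) x" using "0.prems"(1) by simp
    from walk_length[OF this] "0.prems"(2) show ?thesis by simp
  qed
next
  case (Suc k)
  show ?case
  proof (cases "v \<in> S")
    case True then show ?thesis using Suc.prems by (metis append.left_neutral)
  next
    case False
    then obtain d where d: "d \<in> E" "hdE d = v" using S_eq Suc.prems(3) unfolding in_edges_def by blast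
    then have w: "is_walk E tlE hdE (tlE d) (d # es) x" using Suc.prems(1) by simp
    have "card E - length (d # es) \<le> k" using walk_length[OF w] Suc.prems(2) by simp
    from Suc.IH[OF w this tlV[OF d(1)]] obtain \<sigma> as where "\<sigma> \<in> S" "is_walk E tlE hdE \<sigma> (as @ d # es) x" by blast
    then show ?thesis by (metis append.assoc append_Cons append_Nil)
  qed
qed

lemma source_reach: "e \<in> E \<Longrightarrow> \<exists>\<sigma>\<in>S. \<exists>as. is_walk E tlE hdE \<sigma> (as @ [e]) (hdE e)"
  using back_to_source[of "tlE e" "[e]" "hdE e" "card E"] tlV by simp

lemma reaches_iff: "reaches_edge E tlE hdE \<sigma> e \<longleftrightarrow> (\<exists>as. is_walk E tlE hdE \<sigma> (as @ [e]) (hdE e))"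
  unfolding reaches_edge_def by (metis append_butlast_last_id last_snoc snoc_eq_iff_butlast)

abbreviation "DS W \<equiv> D_set E tlE hdE S W"

lemma DS_iff: "\<sigma> \<in> DS W \<longleftrightarrow> \<sigma> \<in> S \<and> (\<exists>e\<in>W. \<exists>as. is_walk E tlE hdE \<sigma> (as @ [e]) (hdE e))"
  unfolding D_set_def reaches_iff by blast

lemma DS_sub: "DS W \<subseteq> S" unfolding D_set_def by blast

lemma rho_DS: "\<rho> \<notin> DS W" using DS_sub rhoS by blast

lemma DS_ne: "W \<subseteq> E \<Longrightarrow> W \<noteq> {} \<Longrightarrow> DS W \<noteq> {}"
  using source_reach DS_iff by blast

end

context netw begin

abbreviation "Wh W \<equiv> W_hat E tlE hdE S W"
abbreviation "Cs W \<equiv> C_star E tlE hdE S \<rho> W"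

lemma Wh_primary: "primary (Wh W) W (DS W)"
proof -
  obtain P where P: "primary P W (DS W)" using primary_ex by blast
  then show ?thesis unfolding W_hat_def using primary_the[OF P] by simp
qed

lemma Cs_props:
  shows "Cs W \<subseteq> E - W" "sep_nodes (E - W) tlE hdE (Cs W) {\<rho>} (DS W)"
    "K \<subseteq> E - W \<Longrightarrow> sep_nodes (E - W) tlE hdE K {\<rho>} (DS W) \<Longrightarrow> card (Cs W) \<le> card K"
proof -
  interpret G: cutg "E - W" tlE hdE using finE by unfold_locales simp
  obtain P where P: "G.primary P (in_edges (E - W) hdE \<rho>) (DS W)" using G.primary_ex by blast
  have Pn: "primary_cut_nodes (E - W) tlE hdE P {\<rho>} (DS W)" using G.primary_nodes_iff[OF rho_DS] P by blast
  have "Cs W = P" unfolding C_star_def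
  proof (rule the_equality)
    show "primary_cut_nodes (E - W) tlE hdE P {\<rho>} (DS W)" by fact
    fix C assume "primary_cut_nodes (E - W) tlE hdE C {\<rho>} (DS W)"
    then have "G.primary C (in_edges (E - W) hdE \<rho>) (DS W)" using G.primary_nodes_iff[OF rho_DS] by blast
    then show "C = P" using G.primary_unique P by blast
  qed
  then have M: "min_cut_nodes (E - W) tlE hdE (Cs W) {\<rho>} (DS W)" using Pn unfolding primary_cut_nodes_def by simp
  then show "Cs W \<subseteq> E - W" "sep_nodes (E - W) tlE hdE (Cs W) {\<rho>} (DS W)" unfolding min_cut_nodes_def by blast+
  show "K \<subseteq> E - W \<Longrightarrow> sep_nodes (E - W) tlE hdE K {\<rho>} (DS W) \<Longrightarrow> card (Cs W) \<le> card K"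
    using M unfolding min_cut_nodes_def by blast
qed

lemma reduce:
  assumes W: "W \<subseteq> E" "W \<noteq> {}" "card W \<le> r"
  shows "Wh W \<in> W'_r E tlE hdE S r" "DS (Wh W) = DS W"
    "K \<subseteq> E - W \<Longrightarrow> sep_nodes (E - W) tlE hdE K {\<rho>} (DS W) \<Longrightarrow> card (Cs (Wh W)) \<le> card K"
proof -
  define P where "P = Wh W"
  define D where "D = DS W"
  have Pp: "primary P W D" unfolding P_def D_def by (rule Wh_primary)
  have Pm: "mincut P W D" using primaryD(1)[OF Pp] .
  have PE: "P \<subseteq> E" using mincutD(1)[OF Pm] .
  have Dne: "D \<noteq> {}" unfolding D_def using DS_ne W by blast
  have cardP: "card P \<le> card W" using mincutD(3)[OF Pm W(1) sep_self] .
  have Pne: "P \<noteq> {}"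
  proof
    assume "P = {}"
    obtain \<sigma> where "\<sigma> \<in> D" using Dne by blast
    then obtain e as where "e \<in> W" "is_walk E tlE hdE \<sigma> (as @ [e]) (hdE e)" unfolding D_def DS_iff by blast
    from sepD[OF mincutD(2)[OF Pm] \<open>\<sigma> \<in> D\<close> this(2,1)] \<open>P = {}\<close> show False by simp
  qed
  have DP: "DS P = D"
  proof
    show "DS P \<subseteq> D"
    proof
      fix \<sigma> assume "\<sigma> \<in> DS P"
      then obtain p as where s: "\<sigma> \<in> S" "p \<in> P" "is_walk E tlE hdE \<sigma> (as @ [p]) (hdE p)" unfolding DS_iff by blast
      obtain bs where bs: "last (p # bs) \<in> W" "is_walk E tlE hdE (hdE p) bs (hdE (last (p # bs)))"
        using essential_fwd[OF Pm s(2)] by blast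
      have "is_walk E tlE hdE \<sigma> (as @ p # bs) (hdE (last (p # bs)))" using s(3) bs(2) by (auto simp: is_walk_append)
      moreover have "as @ p # bs = butlast (as @ p # bs) @ [last (p # bs)]"
        by (metis append_butlast_last_id last_appendR list.distinct(1) Nil_is_append_conv)
      ultimately have "is_walk E tlE hdE \<sigma> (butlast (as @ p # bs) @ [last (p # bs)]) (hdE (last (p # bs)))" by simp
      then show "\<sigma> \<in> D" unfolding D_def DS_iff using s(1) bs(1) by blast
    qed
  next
    show "D \<subseteq> DS P"
    proof
      fix \<sigma> assume "\<sigma> \<in> D"
      then obtain e as where s: "\<sigma> \<in> S" "e \<in> W" "is_walk E tlE hdE \<sigma> (as @ [e]) (hdE e)" unfolding D_def DS_iff by blast
      have "set (as @ [e]) \<inter> P \<noteq> {}" using sepD[OF mincutD(2)[OF Pm] \<open>\<sigma> \<in> D\<close> s(3,2)] .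
      then obtain as' c bs where "c \<in> P" "is_walk E tlE hdE \<sigma> (as' @ [c]) (hdE c)"
        using first_hit[OF s(3)] by blast
      then show "\<sigma> \<in> DS P" unfolding DS_iff using s(1) by blast
    qed
  qed
  have PP: "primary P P D"
  proof -
    have mPP: "mincut P P D"
    proof (rule mincutI[OF PE sep_self])
      fix C assume "C \<subseteq> E" "sep C P D"
      then show "card P \<le> card C" using mincutD(3)[OF Pm] sep_trans[OF _ mincutD(2)[OF Pm]] by blast
    qed
    have "sep P C' D" if C': "mincut C' P D" for C'
    proof -
      have "card C' \<le> card P" using mincutD(3)[OF C' PE sep_self] .
      have "mincut C' W D"
      proof (rule mincutI[OF mincutD(1)[OF C'] sep_trans[OF mincutD(2)[OF C'] mincutD(2)[OF Pm]]])
        fix C assume C: "C \<subseteq> E" "sep C W D"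
        show "card C' \<le> card C" using mincutD(3)[OF Pm C] \<open>card C' \<le> card P\<close> by linarith
      qed
      then show ?thesis using primaryD(2)[OF Pp] by blast
    qed
    then show ?thesis using mPP unfolding primary_cut_edges_def by blast
  qed
  have WhP: "Wh P = P" unfolding W_hat_def DP using primary_the[OF PP] .
  show "Wh W \<in> W'_r E tlE hdE S r" unfolding W'_r_def W_r_def P_def[symmetric]
    using PE Pne cardP W(3) WhP by simp
  show "DS (Wh W) = DS W" using DP unfolding P_def D_def .
  assume K: "K \<subseteq> E - W" "sep_nodes (E - W) tlE hdE K {\<rho>} (DS W)"
  have "sep_nodes (E - P) tlE hdE (K - P) {\<rho>} (DS P)"
    unfolding sep_nodes_def
  proof (intro ballI allI impI)
    fix \<sigma> x es assume s: "\<sigma> \<in> DS P" "x \<in> {\<rho>}" "is_walk (E - P) tlE hdE \<sigma> es x"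
    have sD: "\<sigma> \<in> D" using s(1) DP by simp
    have esP: "set es \<subseteq> E - P" using is_walk_set[OF s(3)] .
    have wE: "is_walk E tlE hdE \<sigma> es x" using is_walk_mono[OF s(3)] esP by blast
    have noW: "set es \<inter> W = {}"
    proof (rule ccontr)
      assume "set es \<inter> W \<noteq> {}"
      then obtain as c bs where "c \<in> W" "is_walk E tlE hdE \<sigma> (as @ [c]) (hdE c)" "es = as @ c # bs"
        using first_hit[OF wE] by blast
      from sepD[OF mincutD(2)[OF Pm] sD this(2,1)] this(3) esP show False by auto
    qed
    have "is_walk (E - W) tlE hdE \<sigma> es x" using is_walk_mono[OF s(3)] esP noW by blast
    then have "set es \<inter> K \<noteq> {}" using K(2) sD s(2) unfolding sep_nodes_def D_def by blast
    then show "set es \<inter> (K - P) \<noteq> {}" using esP by blast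
  qed
  moreover have "K - P \<subseteq> E - P" using K(1) by blast
  ultimately have "card (Cs P) \<le> card (K - P)" using Cs_props(3)[of "K - P" P] by blast
  moreover have "card (K - P) \<le> card K" using finE K(1) by (meson card_Diff_subset finite_Diff finite_subset card_mono Diff_subset finite_subset[OF K(1)])
  ultimately show "card (Cs (Wh W)) \<le> card K" unfolding P_def by linarith
qed

end

context netw begin

abbreviation "Aset r \<equiv> {card (Cs W) | W. W \<in> W'_r E tlE hdE S r}"
abbreviation "Bset r \<equiv> {card C - card W | W C. W \<in> W_r E r \<and> C \<in> Lambda_set E tlE hdE S \<rho> \<and> W \<subseteq> C
                 \<and> DS W \<subseteq> I_set E tlE hdE S \<rho> C}"

lemma Aset_fin: "finite (Aset r)"
proof -
  have "W'_r E tlE hdE S r \<subseteq> Pow E" unfolding W'_r_def W_r_def by blast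
  then have "finite (W'_r E tlE hdE S r)" using finE finite_subset by blast
  moreover have "Aset r = (\<lambda>W. card (Cs W)) ` W'_r E tlE hdE S r" by blast
  ultimately show ?thesis by simp
qed

lemma Bset_fin: "finite (Bset r)"
proof -
  have "Bset r \<subseteq> {..card E}"
  proof
    fix x assume "x \<in> Bset r"
    then obtain W C :: "'e set" where "x = card C - card W" "C \<in> Lambda_set E tlE hdE S \<rho>" by blast
    then have "x = card C - card W" "C \<subseteq> E" unfolding Lambda_set_def by auto
    then show "x \<in> {..card E}" using card_mono[OF finE, of C] by simp
  qed
  then show ?thesis using finite_subset by blast
qed

lemma E_ne: "E \<noteq> {}"
proof -
  have "in_edges E hdE \<rho> \<noteq> {}" using S_eq rhoV rhoS by blast
  then show ?thesis unfolding in_edges_def by blast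
qed

lemma Aset_ne: assumes "1 \<le> r" shows "Aset r \<noteq> {}"
proof -
  obtain e where e: "e \<in> E" using E_ne by blast
  have "Wh {e} \<in> W'_r E tlE hdE S r" using reduce(1)[of "{e}" r] e assms by simp
  then show ?thesis by blast
qed

lemma AB: assumes "a \<in> Aset r" shows "a \<in> Bset r"
proof -
  obtain W where W: "W \<in> W'_r E tlE hdE S r" "a = card (Cs W)" using assms by blast
  have WE: "W \<subseteq> E" "W \<noteq> {}" "card W \<le> r" using W(1) unfolding W'_r_def W_r_def by auto
  define C where "C = W \<union> Cs W"
  have CE: "C \<subseteq> E" using Cs_props(1)[of W] WE unfolding C_def by blast
  have DI: "DS W \<subseteq> I_set E tlE hdE S \<rho> C"
  proof
    fix \<sigma> assume s: "\<sigma> \<in> DS W"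
    have "\<not> (\<exists>es. is_walk (E - C) tlE hdE \<sigma> es \<rho>)"
    proof
      assume "\<exists>es. is_walk (E - C) tlE hdE \<sigma> es \<rho>"
      then obtain es where w: "is_walk (E - C) tlE hdE \<sigma> es \<rho>" by blast
      have se: "set es \<subseteq> E - C" using is_walk_set[OF w] .
      then have "is_walk (E - W) tlE hdE \<sigma> es \<rho>" using is_walk_mono[OF w] unfolding C_def by blast
      then have "set es \<inter> Cs W \<noteq> {}" using Cs_props(2)[of W] s unfolding sep_nodes_def by blast
      with se show False unfolding C_def by blast
    qed
    then show "\<sigma> \<in> I_set E tlE hdE S \<rho> C" unfolding I_set_def using s DS_sub by blast
  qed
  have "C \<in> Lambda_set E tlE hdE S \<rho>" unfolding Lambda_set_def using CE DI DS_ne[OF WE(1,2)] by blast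
  moreover have "card C - card W = card (Cs W)"
  proof -
    have "finite W" "finite (Cs W)" using WE(1) Cs_props(1)[of W] finE finite_subset by blast+
    moreover have "W \<inter> Cs W = {}" using Cs_props(1)[of W] by blast
    ultimately show ?thesis unfolding C_def by (simp add: card_Un_disjoint)
  qed
  moreover have "W \<in> W_r E r" "W \<subseteq> C" using WE unfolding W_r_def C_def by auto
  ultimately show ?thesis using W(2) DI
    apply -
    apply (rule CollectI, rule exI[of _ W], rule exI[of _ C])
    by simp
qed

lemma BA: assumes "b \<in> Bset r" "1 \<le> r" shows "\<exists>a\<in>Aset r. a \<le> b"
proof -
  obtain W C where WC: "b = card C - card W" "W \<in> W_r E r" "C \<in> Lambda_set E tlE hdE S \<rho>" "W \<subseteq> C"
    "DS W \<subseteq> I_set E tlE hdE S \<rho> C" using assms by blast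
  have CE: "C \<subseteq> E" and Ine: "I_set E tlE hdE S \<rho> C \<noteq> {}" using WC(3) unfolding Lambda_set_def by auto
  have WE: "W \<subseteq> E" "card W \<le> r" using WC(2) unfolding W_r_def by auto
  have finC: "finite C" using CE finE finite_subset by blast
  have hitC: "set es \<inter> C \<noteq> {}" if "\<sigma> \<in> I_set E tlE hdE S \<rho> C" "is_walk E' tlE hdE \<sigma> es \<rho>" "E' \<subseteq> E" for \<sigma> es E'
  proof
    assume "set es \<inter> C = {}"
    then have "is_walk (E - C) tlE hdE \<sigma> es \<rho>" using is_walk_mono[OF that(2)] is_walk_set[OF that(2)] that(3) by blast
    then show False using that(1) unfolding I_set_def by blast
  qed
  show ?thesis
  proof (cases "W = {}")
    case False
    define K where "K = C - W"
    have "sep_nodes (E - W) tlE hdE K {\<rho>} (DS W)"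
      unfolding sep_nodes_def
    proof (intro ballI allI impI)
      fix \<sigma> x es assume s: "\<sigma> \<in> DS W" "x \<in> {\<rho>}" "is_walk (E - W) tlE hdE \<sigma> es x"
      have "set es \<inter> C \<noteq> {}" using hitC[of \<sigma> "E - W" es] s WC(5) by blast
      moreover have "set es \<inter> W = {}" using is_walk_set[OF s(3)] by blast
      ultimately show "set es \<inter> K \<noteq> {}" unfolding K_def by blast
    qed
    moreover have "K \<subseteq> E - W" unfolding K_def using CE by blast
    ultimately have "card (Cs (Wh W)) \<le> card K" using reduce(3)[OF WE(1) False WE(2)] by blast
    moreover have "card K = card C - card W" unfolding K_def using card_Diff_subset[OF finite_subset[OF WC(4) finC] WC(4)] .
    moreover have "card (Cs (Wh W)) \<in> Aset r" using reduce(1)[OF WE(1) False WE(2)] by blast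
    ultimately show ?thesis using WC(1) by (intro bexI[of _ "card (Cs (Wh W))"]) simp_all
  next
    case True
    obtain \<sigma> where \<sigma>: "\<sigma> \<in> I_set E tlE hdE S \<rho> C" using Ine by blast
    have \<sigma>S: "\<sigma> \<in> S" using \<sigma> unfolding I_set_def by blast
    then have \<sigma>V: "\<sigma> \<in> V - {\<rho>}" using S_eq rhoS by blast
    obtain es where es: "is_walk E tlE hdE \<sigma> es \<rho>" using to_rho[OF \<sigma>V] by blast
    have "es \<noteq> []" using es \<sigma>V by auto
    then obtain e es' where "es = e # es'" by (cases es) auto
    then have e: "e \<in> E" "tlE e = \<sigma>" using es by auto
    have Dse: "DS {e} \<subseteq> {\<sigma>}"
    proof
      fix \<sigma>' assume "\<sigma>' \<in> DS {e}"
      then obtain as where w: "is_walk E tlE hdE \<sigma>' (as @ [e]) (hdE e)" unfolding DS_iff by blast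
      show "\<sigma>' \<in> {\<sigma>}"
      proof (cases "as = []")
        case True then show ?thesis using w e by simp
      next
        case False
        then obtain as' d where as: "as = as' @ [d]" by (metis append_butlast_last_id)
        then have "d \<in> E" "hdE d = \<sigma>" using w e by (auto simp: is_walk_append)
        then have "d \<in> in_edges E hdE \<sigma>" unfolding in_edges_def by simp
        then show ?thesis using \<sigma>S S_eq by blast
      qed
    qed
    define K where "K = C - {e}"
    have "sep_nodes (E - {e}) tlE hdE K {\<rho>} (DS {e})"
      unfolding sep_nodes_def
    proof (intro ballI allI impI)
      fix \<sigma>' x es assume s: "\<sigma>' \<in> DS {e}" "x \<in> {\<rho>}" "is_walk (E - {e}) tlE hdE \<sigma>' es x"
      have "\<sigma>' = \<sigma>" using s(1) Dse by blast
      then have "set es \<inter> C \<noteq> {}" using hitC[of \<sigma> "E - {e}" es] s \<sigma> by blast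
      moreover have "e \<notin> set es" using is_walk_set[OF s(3)] by blast
      ultimately show "set es \<inter> K \<noteq> {}" unfolding K_def by blast
    qed
    moreover have "K \<subseteq> E - {e}" unfolding K_def using CE by blast
    ultimately have "card (Cs (Wh {e})) \<le> card K" using reduce(3)[of "{e}" r K] e assms(2) by simp
    moreover have "card K \<le> card C" unfolding K_def using finC by (simp add: card_mono)
    moreover have "Wh {e} \<in> W'_r E tlE hdE S r" using reduce(1)[of "{e}" r] e assms(2) by simp
    then have "card (Cs (Wh {e})) \<in> Aset r" by blast
    ultimately show ?thesis using WC(1) True by (intro bexI[of _ "card (Cs (Wh {e}))"]) simp_all
  qed
qed

lemma AB_eq: assumes "1 \<le> r" shows "Min (Aset r) = Min (Bset r)"
proof (rule antisym)
  have Ane: "Aset r \<noteq> {}" using Aset_ne[OF assms] .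
  then obtain a0 where a0: "a0 \<in> Aset r" by blast
  have "a0 \<in> Bset r" by (rule AB[OF a0])
  then have Bne: "Bset r \<noteq> {}" by (metis empty_iff)
  obtain a where "a \<in> Aset r" "a \<le> Min (Bset r)" using BA[OF Min_in[OF Bset_fin Bne] assms] by blast
  then show "Min (Aset r) \<le> Min (Bset r)" using Min_le[OF Aset_fin] by (meson order_trans)
  have "Min (Aset r) \<in> Bset r" using AB[OF Min_in[OF Aset_fin Ane]] .
  then show "Min (Bset r) \<le> Min (Aset r)" using Min_le[OF Bset_fin] by blast
qed

end

context netw begin

lemma dependence:
  fixes y :: "'e \<Rightarrow> ('v \<Rightarrow> 'f list) \<times> ('v \<Rightarrow> nat) \<Rightarrow> 'f list"
  assumes yS: "\<And>\<omega> e. \<omega> \<in> \<Omega> \<Longrightarrow> e \<in> E \<Longrightarrow> tlE e \<in> S \<Longrightarrow> y e \<omega> = enc e (fst \<omega> (tlE e)) (snd \<omega> (tlE e))"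
    and yN: "\<And>\<omega> e. \<omega> \<in> \<Omega> \<Longrightarrow> e \<in> E \<Longrightarrow> tlE e \<notin> S \<Longrightarrow>
            y e \<omega> = phi e (\<lambda>d. if d \<in> in_edges E hdE (tlE e) then y d \<omega> else [])"
    and om: "\<omega> \<in> \<Omega>" "\<omega>' \<in> \<Omega>"
    and agree: "\<And>\<sigma>. \<sigma> \<in> S - T \<Longrightarrow> fst \<omega> \<sigma> = fst \<omega>' \<sigma> \<and> snd \<omega> \<sigma> = snd \<omega>' \<sigma>"
    and Zeq: "\<And>z. z \<in> Z \<Longrightarrow> y z \<omega> = y z \<omega>'"
    and e: "e \<in> E" "sep Z {e} T"
  shows "y e \<omega> = y e \<omega>'"
proof -
  have main: "\<forall>e\<in>E. (\<forall>v as. is_walk E tlE hdE v (as @ [e]) (hdE e) \<longrightarrow> length as < n) \<longrightarrow> sep Z {e} T \<longrightarrow> y e \<omega> = y e \<omega>'" for n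
  proof (induction n)
    case 0
    show ?case
    proof (intro ballI impI)
      fix e assume "e \<in> E" and b: "\<forall>v as. is_walk E tlE hdE v (as @ [e]) (hdE e) \<longrightarrow> length as < 0"
      have "is_walk E tlE hdE (tlE e) ([] @ [e]) (hdE e)" using \<open>e \<in> E\<close> by simp
      with b show "y e \<omega> = y e \<omega>'" by blast
    qed
  next
    case (Suc n)
    show ?case
    proof (intro ballI impI)
      fix e assume eE: "e \<in> E" and b: "\<forall>v as. is_walk E tlE hdE v (as @ [e]) (hdE e) \<longrightarrow> length as < Suc n"
        and se: "sep Z {e} T"
      show "y e \<omega> = y e \<omega>'"
      proof (cases "e \<in> Z")
        case True then show ?thesis using Zeq by blast
      next
        case eZ: False
        show ?thesis
        proof (cases "tlE e \<in> S")
          case True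
          have "tlE e \<notin> T"
          proof
            assume "tlE e \<in> T"
            have "is_walk E tlE hdE (tlE e) ([] @ [e]) (hdE e)" using eE by simp
            from sepD[OF se \<open>tlE e \<in> T\<close> this] eZ show False by simp
          qed
          then have "tlE e \<in> S - T" using True by blast
          then show ?thesis using yS[OF om(1) eE True] yS[OF om(2) eE True] agree by simp
        next
          case False
          have "(\<lambda>d. if d \<in> in_edges E hdE (tlE e) then y d \<omega> else []) =
                (\<lambda>d. if d \<in> in_edges E hdE (tlE e) then y d \<omega>' else [])"
          proof
            fix d
            show "(if d \<in> in_edges E hdE (tlE e) then y d \<omega> else []) =
                  (if d \<in> in_edges E hdE (tlE e) then y d \<omega>' else [])"
            proof (cases "d \<in> in_edges E hdE (tlE e)")
              case True
              then have d: "d \<in> E" "hdE d = tlE e" unfolding in_edges_def by auto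
              have bd: "\<forall>v as. is_walk E tlE hdE v (as @ [d]) (hdE d) \<longrightarrow> length as < n"
              proof (intro allI impI)
                fix v as assume "is_walk E tlE hdE v (as @ [d]) (hdE d)"
                then have "is_walk E tlE hdE v ((as @ [d]) @ [e]) (hdE e)" using d eE by (auto simp: is_walk_append)
                then show "length as < n" using b by fastforce
              qed
              have sd: "sep Z {d} T"
              proof (rule sepI)
                fix u as x assume u: "u \<in> T" and w: "is_walk E tlE hdE u (as @ [x]) (hdE x)" and x: "x \<in> {d}"
                then have "is_walk E tlE hdE u ((as @ [x]) @ [e]) (hdE e)" using d eE by (auto simp: is_walk_append)
                from sepD[OF se u this] eZ show "set (as @ [x]) \<inter> Z \<noteq> {}" by auto
              qed
              show ?thesis using Suc.IH d(1) bd sd True by simp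
            qed simp
          qed
          then show ?thesis using yN[OF om(1) eE False] yN[OF om(2) eE False] by simp
        qed
      qed
    qed
  qed
  have "\<forall>v as. is_walk E tlE hdE v (as @ [e]) (hdE e) \<longrightarrow> length as < card E"
    using walk_length by fastforce
  then show ?thesis using main[of "card E"] e by blast
qed

end

lemma vec_sum_nth: "j < l \<Longrightarrow> vec_sum l S m ! j = (\<Sum>\<sigma>\<in>S. m \<sigma> ! j)"
  unfolding vec_sum_def by simp

lemma vec_sum_upd:
  assumes "finite S" "\<sigma>0 \<in> S" "j < l"
  shows "vec_sum l S (m(\<sigma>0 := t)) ! j = t ! j + (\<Sum>\<sigma>\<in>S - {\<sigma>0}. m \<sigma> ! j)"
proof -
  have "vec_sum l S (m(\<sigma>0 := t)) ! j = (\<Sum>\<sigma>\<in>S. (m(\<sigma>0 := t)) \<sigma> ! j)" using vec_sum_nth[OF assms(3)] .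
  also have "\<dots> = t ! j + (\<Sum>\<sigma>\<in>S - {\<sigma>0}. (m(\<sigma>0 := t)) \<sigma> ! j)"
    using sum.remove[OF assms(1,2), of "\<lambda>\<sigma>. (m(\<sigma>0 := t)) \<sigma> ! j"] by simp
  also have "(\<Sum>\<sigma>\<in>S - {\<sigma>0}. (m(\<sigma>0 := t)) \<sigma> ! j) = (\<Sum>\<sigma>\<in>S - {\<sigma>0}. m \<sigma> ! j)"
    by (rule sum.cong) auto
  finally show ?thesis .
qed

lemma card_field_ge2: "2 \<le> CARD('f::{finite,field})"
proof -
  have "{0, 1::'f} \<subseteq> UNIV" by simp
  then have "card {0, 1::'f} \<le> CARD('f)" by (intro card_mono) simp_all
  moreover have "card {0, 1::'f} = 2" by simp
  ultimately show ?thesis by simp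
qed

lemma card_lists_n: "card {xs :: 'a::finite list. length xs = n} = CARD('a) ^ n"
  using card_lists_length_eq[of "UNIV :: 'a set" n] by simp

context netw begin

lemma counting:
  fixes y :: "'e \<Rightarrow> ('v \<Rightarrow> 'f::{finite,field} list) \<times> ('v \<Rightarrow> nat) \<Rightarrow> 'f list"
    and K :: "'v \<Rightarrow> nat set" and psi :: "('e \<Rightarrow> 'f list) \<Rightarrow> 'f list"
    and enc :: "'e \<Rightarrow> 'f list \<Rightarrow> nat \<Rightarrow> 'f list" and l n :: nat
    and phi :: "'e \<Rightarrow> ('e \<Rightarrow> 'f list) \<Rightarrow> 'f list"
  defines "\<Omega> \<equiv> sample_space S K l"
  assumes yS: "\<And>\<omega> e. \<omega> \<in> \<Omega> \<Longrightarrow> e \<in> E \<Longrightarrow> tlE e \<in> S \<Longrightarrow> y e \<omega> = enc e (fst \<omega> (tlE e)) (snd \<omega> (tlE e))"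
    and yN: "\<And>\<omega> e. \<omega> \<in> \<Omega> \<Longrightarrow> e \<in> E \<Longrightarrow> tlE e \<notin> S \<Longrightarrow>
            y e \<omega> = phi e (\<lambda>d. if d \<in> in_edges E hdE (tlE e) then y d \<omega> else [])"
    and ylen: "\<And>\<omega> e. \<omega> \<in> \<Omega> \<Longrightarrow> e \<in> E \<Longrightarrow> length (y e \<omega>) = n"
    and dec: "\<And>\<omega>. \<omega> \<in> \<Omega> \<Longrightarrow> psi (\<lambda>d. if d \<in> in_edges E hdE \<rho> then y d \<omega> else []) = vec_sum l S (fst \<omega>)"
    and W: "W \<subseteq> E" "W \<noteq> {}"
    and Kc: "Kc \<subseteq> E - W" "sep_nodes (E - W) tlE hdE Kc {\<rho>} (DS W)"
    and om0: "omz \<in> \<Omega>"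
    and indep: "\<And>m. (\<forall>\<sigma>\<in>S. length (m \<sigma>) = l) \<Longrightarrow> (\<forall>v. v \<notin> S \<longrightarrow> m v = []) \<Longrightarrow>
                 \<exists>k. (m, k) \<in> \<Omega> \<and> (\<forall>e\<in>W. y e (m, k) = y e omz)"
  shows "l \<le> n * card Kc"
proof -
  have finS: "finite S" using net unfolding network_def by (metis (no_types, lifting) finite_subset mem_Collect_eq subsetI)
  define D where "D = DS W"
  obtain \<sigma>0 where s0: "\<sigma>0 \<in> D" using DS_ne[OF W] unfolding D_def by blast
  have DS': "D \<subseteq> S" unfolding D_def by (rule DS_sub)
  have s0S: "\<sigma>0 \<in> S" using s0 DS' by blast
  obtain m0 k0 where om0e: "omz = (m0, k0)" by (cases omz)
  have m0: "\<forall>\<sigma>\<in>S. length (m0 \<sigma>) = l \<and> k0 \<sigma> \<in> K \<sigma>" "\<forall>v. v \<notin> S \<longrightarrow> m0 v = [] \<and> k0 v = 0"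
    using om0 unfolding \<Omega>_def sample_space_def om0e by auto
  define L where "L = {t :: 'f list. length t = l}"
  define mt where "mt t = m0(\<sigma>0 := t)" for t
  have "\<forall>t\<in>L. \<exists>k. (mt t, k) \<in> \<Omega> \<and> (\<forall>e\<in>W. y e (mt t, k) = y e omz)"
  proof
    fix t assume "t \<in> L"
    show "\<exists>k. (mt t, k) \<in> \<Omega> \<and> (\<forall>e\<in>W. y e (mt t, k) = y e omz)"
    proof (rule indep)
      show "\<forall>\<sigma>\<in>S. length (mt t \<sigma>) = l" using m0 \<open>t \<in> L\<close> unfolding mt_def L_def by auto
      show "\<forall>v. v \<notin> S \<longrightarrow> mt t v = []" using m0 s0S unfolding mt_def by auto
    qed
  qed
  from bchoice[OF this] obtain kk where kk: "\<forall>t\<in>L. (mt t, kk t) \<in> \<Omega> \<and> (\<forall>e\<in>W. y e (mt t, kk t) = y e omz)"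
    by blast
  define om where "om t = (mt t, \<lambda>v. if v \<in> D then kk t v else k0 v)" for t
  have omO: "om t \<in> \<Omega>" if t: "t \<in> L" for t
  proof -
    have "(mt t, kk t) \<in> \<Omega>" using kk t by blast
    then have A: "\<forall>\<sigma>\<in>S. length (mt t \<sigma>) = l \<and> kk t \<sigma> \<in> K \<sigma>" "\<forall>v. v \<notin> S \<longrightarrow> mt t v = []"
      unfolding \<Omega>_def sample_space_def by auto
    show ?thesis unfolding om_def \<Omega>_def sample_space_def using A m0 DS' by auto
  qed
  have omW: "y e (om t) = y e omz" if t: "t \<in> L" and e: "e \<in> W" for t e
  proof -
    have "y e (om t) = y e (mt t, kk t)"
    proof (rule dependence[where \<Omega>=\<Omega> and T="S - D" and Z="{}"])
      show "\<And>\<omega> e. \<omega> \<in> \<Omega> \<Longrightarrow> e \<in> E \<Longrightarrow> tlE e \<in> S \<Longrightarrow> y e \<omega> = enc e (fst \<omega> (tlE e)) (snd \<omega> (tlE e))" by (rule yS)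
      show "\<And>\<omega> e. \<omega> \<in> \<Omega> \<Longrightarrow> e \<in> E \<Longrightarrow> tlE e \<notin> S \<Longrightarrow>
            y e \<omega> = phi e (\<lambda>d. if d \<in> in_edges E hdE (tlE e) then y d \<omega> else [])" by (rule yN)
      show "om t \<in> \<Omega>" by (rule omO[OF t])
      show "(mt t, kk t) \<in> \<Omega>" using kk t by blast
      show "\<And>\<sigma>. \<sigma> \<in> S - (S - D) \<Longrightarrow> fst (om t) \<sigma> = fst (mt t, kk t) \<sigma> \<and> snd (om t) \<sigma> = snd (mt t, kk t) \<sigma>"
        unfolding om_def by auto
      show "\<And>z. z \<in> {} \<Longrightarrow> y z (om t) = y z (mt t, kk t)" by simp
      show "e \<in> E" using e W by blast
      show "sep {} {e} (S - D)"
      proof (rule sepI)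
        fix u as x assume u: "u \<in> S - D" and w: "is_walk E tlE hdE u (as @ [x]) (hdE x)" and x: "x \<in> {e}"
        have "u \<in> D" unfolding D_def DS_iff using u w x e by blast
        with u show "set (as @ [x]) \<inter> {} \<noteq> {}" by blast
      qed
    qed
    also have "\<dots> = y e omz" using kk t e by blast
    finally show ?thesis .
  qed
  define G where "G t = (\<lambda>z. if z \<in> Kc then y z (om t) else [])" for t
  have inj: "inj_on G L"
  proof (rule inj_onI)
    fix t s assume t: "t \<in> L" and s: "s \<in> L" and Geq: "G t = G s"
    have ind: "y d (om t) = y d (om s)" if d: "d \<in> in_edges E hdE \<rho>" for d
    proof (rule dependence[where \<Omega>=\<Omega> and T="D" and Z="W \<union> Kc"])
      show "\<And>\<omega> e. \<omega> \<in> \<Omega> \<Longrightarrow> e \<in> E \<Longrightarrow> tlE e \<in> S \<Longrightarrow> y e \<omega> = enc e (fst \<omega> (tlE e)) (snd \<omega> (tlE e))" by (rule yS)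
      show "\<And>\<omega> e. \<omega> \<in> \<Omega> \<Longrightarrow> e \<in> E \<Longrightarrow> tlE e \<notin> S \<Longrightarrow>
            y e \<omega> = phi e (\<lambda>d. if d \<in> in_edges E hdE (tlE e) then y d \<omega> else [])" by (rule yN)
      show "om t \<in> \<Omega>" by (rule omO[OF t])
      show "om s \<in> \<Omega>" by (rule omO[OF s])
      show "\<And>\<sigma>. \<sigma> \<in> S - D \<Longrightarrow> fst (om t) \<sigma> = fst (om s) \<sigma> \<and> snd (om t) \<sigma> = snd (om s) \<sigma>"
        unfolding om_def mt_def using s0 by auto
      show "\<And>z. z \<in> W \<union> Kc \<Longrightarrow> y z (om t) = y z (om s)"
      proof -
        fix z assume "z \<in> W \<union> Kc"
        then show "y z (om t) = y z (om s)"
        proof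
          assume "z \<in> W" then show ?thesis using omW t s by simp
        next
          assume "z \<in> Kc" then show ?thesis using fun_cong[OF Geq, of z] unfolding G_def by simp
        qed
      qed
      show "d \<in> E" using d unfolding in_edges_def by blast
      show "sep (W \<union> Kc) {d} D"
      proof (rule sepI)
        fix u as x assume u: "u \<in> D" and w: "is_walk E tlE hdE u (as @ [x]) (hdE x)" and x: "x \<in> {d}"
        show "set (as @ [x]) \<inter> (W \<union> Kc) \<noteq> {}"
        proof (cases "set (as @ [x]) \<inter> W = {}")
          case True
          have "is_walk (E - W) tlE hdE u (as @ [x]) (hdE x)" using is_walk_mono[OF w] is_walk_set[OF w] True by blast
          moreover have "hdE x = \<rho>" using x d unfolding in_edges_def by simp
          ultimately have w2: "is_walk (E - W) tlE hdE u (as @ [x]) \<rho>" by simp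
          have "\<forall>u\<in>DS W. \<forall>x\<in>{\<rho>}. \<forall>es. is_walk (E - W) tlE hdE u es x \<longrightarrow> set es \<inter> Kc \<noteq> {}"
            using Kc(2) unfolding sep_nodes_def .
          then have "set (as @ [x]) \<inter> Kc \<noteq> {}" using w2 u unfolding D_def by blast
          then show ?thesis by blast
        qed blast
      qed
    qed
    have "(\<lambda>d. if d \<in> in_edges E hdE \<rho> then y d (om t) else []) = (\<lambda>d. if d \<in> in_edges E hdE \<rho> then y d (om s) else [])"
      using ind by auto
    then have "vec_sum l S (fst (om t)) = vec_sum l S (fst (om s))" using dec[OF omO[OF t]] dec[OF omO[OF s]] by simp
    then have vs: "vec_sum l S (mt t) = vec_sum l S (mt s)" unfolding om_def by simp
    show "t = s"
    proof (rule nth_equalityI)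
      show "length t = length s" using t s unfolding L_def by simp
      fix j assume "j < length t"
      then have j: "j < l" using t unfolding L_def by simp
      have "vec_sum l S (mt t) ! j = vec_sum l S (mt s) ! j" using vs by simp
      then have "t ! j + (\<Sum>\<sigma>\<in>S - {\<sigma>0}. m0 \<sigma> ! j) = s ! j + (\<Sum>\<sigma>\<in>S - {\<sigma>0}. m0 \<sigma> ! j)"
        unfolding mt_def vec_sum_upd[OF finS s0S j, of m0 t] vec_sum_upd[OF finS s0S j, of m0 s] .
      then show "t ! j = s ! j" by simp
    qed
  qed
  define Ln where "Ln = {xs :: 'f list. length xs = n}"
  define hh where "hh f = (\<lambda>z. if z \<in> Kc then f z else ([] :: 'f list))" for f :: "'e \<Rightarrow> 'f list"
  have finKc: "finite Kc" using Kc(1) finE finite_subset by blast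
  have finLn: "finite Ln" unfolding Ln_def using finite_lists_length_eq[of "UNIV :: 'f set" n] by simp
  have GL: "G ` L \<subseteq> hh ` (PiE Kc (\<lambda>_. Ln))"
  proof
    fix g assume "g \<in> G ` L"
    then obtain t where t: "t \<in> L" "g = G t" by blast
    have "restrict (\<lambda>z. y z (om t)) Kc \<in> PiE Kc (\<lambda>_. Ln)"
      using ylen[OF omO[OF t(1)]] Kc(1) unfolding Ln_def by auto
    moreover have "g = hh (restrict (\<lambda>z. y z (om t)) Kc)" unfolding t(2) G_def hh_def by auto
    ultimately show "g \<in> hh ` (PiE Kc (\<lambda>_. Ln))" by blast
  qed
  have "CARD('f) ^ l = card L" unfolding L_def using card_lists_n by metis
  also have "\<dots> = card (G ` L)" using card_image[OF inj] by simp
  also have "\<dots> \<le> card (hh ` (PiE Kc (\<lambda>_. Ln)))"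
    by (rule card_mono[OF finite_imageI[OF finite_PiE[OF finKc finLn]] GL])
  also have "\<dots> \<le> card (PiE Kc (\<lambda>_. Ln))" by (rule card_image_le[OF finite_PiE[OF finKc finLn]])
  also have "\<dots> = card Ln ^ card Kc" using card_PiE[OF finKc, of "\<lambda>_. Ln"] by simp
  also have "\<dots> = CARD('f) ^ (n * card Kc)" unfolding Ln_def card_lists_n by (simp add: power_mult)
  finally have "CARD('f) ^ l \<le> CARD('f) ^ (n * card Kc)" .
  then show ?thesis using card_field_ge2[where 'f='f] by (meson power_le_imp_le_exp less_le_trans one_less_numeral_iff semiring_norm(76))
qed

end

lemma pmf_set_pos:
  assumes fin: "finite \<Omega>" and ne: "\<Omega> \<noteq> {}" and w: "\<omega> \<in> \<Omega>" and A: "\<omega> \<in> A"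
  shows "0 < emeasure (measure_pmf (pmf_of_set \<Omega>)) A"
proof -
  have "0 < measure_pmf.prob (pmf_of_set \<Omega>) A"
    by (rule measure_pmf_posI[of \<omega>]) (use fin ne w A in simp_all)
  then show ?thesis by (simp add: measure_pmf.emeasure_eq_measure)
qed

lemma pmf_set_zero:
  assumes fin: "finite \<Omega>" and ne: "\<Omega> \<noteq> {}" and A: "A \<inter> \<Omega> = {}"
  shows "emeasure (measure_pmf (pmf_of_set \<Omega>)) A = 0"
proof -
  have "measure_pmf.prob (pmf_of_set \<Omega>) A = 0"
    unfolding measure_pmf_zero_iff using fin ne A by auto
  then show ?thesis by (simp add: measure_pmf.emeasure_eq_measure)
qed

lemma mi_zero_support:
  fixes \<Omega> :: "'a set" and X :: "'a \<Rightarrow> 'b" and Y :: "'a \<Rightarrow> 'c"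
  assumes fin: "finite \<Omega>" and ne: "\<Omega> \<noteq> {}"
    and MI: "prob_space.mutual_information (measure_pmf (pmf_of_set \<Omega>)) 2 (count_space UNIV) (count_space UNIV) X Y = 0"
    and w1: "\<omega>1 \<in> \<Omega>" and w2: "\<omega>2 \<in> \<Omega>"
  shows "\<exists>\<omega>\<in>\<Omega>. X \<omega> = X \<omega>1 \<and> Y \<omega> = Y \<omega>2"
proof -
  define p where "p = pmf_of_set \<Omega>"
  define M where "M = measure_pmf p"
  have setp: "set_pmf p = \<Omega>" unfolding p_def using fin ne by simp
  interpret I: information_space M 2
    unfolding M_def by (intro information_space.intro prob_space_measure_pmf) (simp add: information_space_axioms_def)
  define SX where "SX = (count_space UNIV :: 'b measure)"
  define SY where "SY = (count_space UNIV :: 'c measure)"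
  define PX where "PX = distr M SX X"
  define PY where "PY = distr M SY Y"
  define P where "P = PX \<Otimes>\<^sub>M PY"
  define g where "g = (\<lambda>x. (X x, Y x))"
  define Q where "Q = distr M (SX \<Otimes>\<^sub>M SY) g"
  have mX: "X \<in> measurable M SX" and mY: "Y \<in> measurable M SY" and mg: "g \<in> measurable M (SX \<Otimes>\<^sub>M SY)"
    unfolding M_def SX_def SY_def by (auto simp: space_pair_measure)
  interpret PX: prob_space PX unfolding PX_def by (rule I.prob_space_distr[OF mX])
  interpret PY: prob_space PY unfolding PY_def by (rule I.prob_space_distr[OF mY])
  have setsP: "sets P = sets (SX \<Otimes>\<^sub>M SY)" unfolding P_def PX_def PY_def by (rule sets_pair_measure_cong) simp_all
  have setsQ: "sets Q = sets (SX \<Otimes>\<^sub>M SY)" unfolding Q_def by simp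
  have sing: "{(a, b)} \<in> sets (SX \<Otimes>\<^sub>M SY)" for a b
  proof -
    have "{a} \<times> {b} \<in> sets (SX \<Otimes>\<^sub>M SY)" unfolding SX_def SY_def by (rule pair_measureI) simp_all
    then show ?thesis by simp
  qed
  have Ppos: "0 < emeasure P {(X \<omega>, Y \<omega>')}" if "\<omega> \<in> \<Omega>" "\<omega>' \<in> \<Omega>" for \<omega> \<omega>'
  proof -
    have "emeasure P ({X \<omega>} \<times> {Y \<omega>'}) = emeasure PX {X \<omega>} * emeasure PY {Y \<omega>'}"
      unfolding P_def by (rule PY.emeasure_pair_measure_Times) (simp_all add: PX_def PY_def SX_def SY_def)
    moreover have "emeasure PX {X \<omega>} = emeasure M (X -` {X \<omega>} \<inter> space M)"
      unfolding PX_def by (rule emeasure_distr[OF mX]) (simp add: SX_def)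
    moreover have "emeasure PY {Y \<omega>'} = emeasure M (Y -` {Y \<omega>'} \<inter> space M)"
      unfolding PY_def by (rule emeasure_distr[OF mY]) (simp add: SY_def)
    moreover have "0 < emeasure M (X -` {X \<omega>} \<inter> space M)"
      unfolding M_def p_def by (rule pmf_set_pos[OF fin ne that(1)]) simp
    moreover have "0 < emeasure M (Y -` {Y \<omega>'} \<inter> space M)"
      unfolding M_def p_def by (rule pmf_set_pos[OF fin ne that(2)]) simp
    ultimately show ?thesis by (simp add: ennreal_zero_less_mult_iff)
  qed
  have Qeq: "emeasure Q A = emeasure M (g -` A \<inter> space M)" if "A \<in> sets (SX \<Otimes>\<^sub>M SY)" for A
    unfolding Q_def by (rule emeasure_distr[OF mg that])
  have ac: "absolutely_continuous P Q"
    unfolding absolutely_continuous_def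
  proof
    fix A assume A: "A \<in> null_sets P"
    then have As: "A \<in> sets (SX \<Otimes>\<^sub>M SY)" and A0: "emeasure P A = 0" using setsP by auto
    have "emeasure Q A = 0"
    proof (rule ccontr)
      assume "emeasure Q A \<noteq> 0"
      then have "emeasure M (g -` A \<inter> space M) \<noteq> 0" using Qeq[OF As] by simp
      then have "(g -` A \<inter> space M) \<inter> \<Omega> \<noteq> {}" using pmf_set_zero[OF fin ne] unfolding M_def p_def by blast
      then obtain \<omega> where \<omega>: "\<omega> \<in> \<Omega>" "g \<omega> \<in> A" by blast
      have "emeasure P {g \<omega>} \<le> emeasure P A"
        by (rule emeasure_mono) (use \<omega> As setsP in auto)
      moreover have "0 < emeasure P {g \<omega>}" using Ppos[OF \<omega>(1) \<omega>(1)] unfolding g_def by simp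
      ultimately show False using A0 by simp
    qed
    then show "A \<in> null_sets Q" using As setsQ by auto
  qed
  have edm: "entropy_density 2 P Q \<in> borel_measurable (SX \<Otimes>\<^sub>M SY)"
    using measurable_entropy_density[of 2 P Q] measurable_cong_sets[OF setsP refl] by blast
  have "integrable M (\<lambda>x. entropy_density 2 P Q (g x))"
    unfolding M_def by (rule integrable_measure_pmf_finite) (simp add: setp fin)
  then have int: "integrable Q (entropy_density 2 P Q)"
    using integrable_distr_eq[OF mg edm, folded Q_def] by simp
  have MI': "I.mutual_information 2 SX SY X Y = 0" using MI unfolding M_def p_def SX_def SY_def .
  have KL: "KL_divergence 2 P Q = 0" using MI' unfolding I.mutual_information_def P_def PX_def PY_def Q_def g_def .
  interpret PXY: pair_prob_space PX PY by standard
  interpret PI: information_space P 2 unfolding P_def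
    by (intro information_space.intro PXY.P.prob_space_axioms) (simp add: information_space_axioms_def)
  interpret QP: prob_space Q unfolding Q_def by (rule I.prob_space_distr[OF mg])
  have "Q = P"
  proof (rule PI.KL_eq_0_iff_eq_ac[THEN iffD1])
    show "prob_space Q" by (rule QP.prob_space_axioms)
    show "absolutely_continuous P Q" by (rule ac)
    show "sets Q = sets P" using setsP setsQ by simp
    show "integrable Q (entropy_density 2 P Q)" by (rule int)
    show "KL_divergence 2 P Q = 0" by (rule KL)
  qed
  then have PQ: "P = Q" by simp
  have "0 < emeasure Q {(X \<omega>1, Y \<omega>2)}" using Ppos[OF w1 w2] PQ by simp
  then have "emeasure M (g -` {(X \<omega>1, Y \<omega>2)} \<inter> space M) \<noteq> 0" using Qeq[OF sing] by simp
  then have "(g -` {(X \<omega>1, Y \<omega>2)} \<inter> space M) \<inter> \<Omega> \<noteq> {}" using pmf_set_zero[OF fin ne] unfolding M_def p_def by blast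
  then show ?thesis unfolding g_def by auto
qed


context netw begin

lemma finS: "finite S"
  using net unfolding network_def by (metis (no_types, lifting) finite_subset mem_Collect_eq subsetI)

lemma code_bound:
  fixes F :: "'f::{finite,field} itself"
  assumes adm: "admissible_code E tlE hdE S \<rho> r F l n"
    and W: "W \<in> W_r E r" "W \<noteq> {}"
    and Kc: "Kc \<subseteq> E - W" "sep_nodes (E - W) tlE hdE Kc {\<rho>} (DS W)"
  shows "l \<le> n * card Kc"
proof -
  obtain K :: "'v \<Rightarrow> nat set" and enc :: "'e \<Rightarrow> 'f list \<Rightarrow> nat \<Rightarrow> 'f list"
    and phi :: "'e \<Rightarrow> ('e \<Rightarrow> 'f list) \<Rightarrow> 'f list" and psi :: "('e \<Rightarrow> 'f list) \<Rightarrow> 'f list"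
    and y :: "'e \<Rightarrow> ('v \<Rightarrow> 'f list) \<times> ('v \<Rightarrow> nat) \<Rightarrow> 'f list"
    where A: "\<forall>\<sigma>\<in>S. finite (K \<sigma>) \<and> K \<sigma> \<noteq> {}"
      "\<forall>\<omega>\<in>sample_space S K l. \<forall>e\<in>E. tlE e \<in> S \<longrightarrow> y e \<omega> = enc e (fst \<omega> (tlE e)) (snd \<omega> (tlE e))"
      "\<forall>\<omega>\<in>sample_space S K l. \<forall>e\<in>E. tlE e \<notin> S \<longrightarrow>
            y e \<omega> = phi e (\<lambda>d. if d \<in> in_edges E hdE (tlE e) then y d \<omega> else [])"
      "\<forall>\<omega>\<in>sample_space S K l. \<forall>e\<in>E. length (y e \<omega>) = n"
      "\<forall>\<omega>\<in>sample_space S K l. psi (\<lambda>d. if d \<in> in_edges E hdE \<rho> then y d \<omega> else []) = vec_sum l S (fst \<omega>)"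
      "\<forall>W\<in>W_r E r.
           prob_space.mutual_information (measure_pmf (pmf_of_set (sample_space S K l))) 2 (count_space UNIV) (count_space UNIV)
             (\<lambda>\<omega>. \<lambda>e. if e \<in> W then y e \<omega> else []) (\<lambda>\<omega>. fst \<omega>) = 0"
    using adm unfolding admissible_code_def Let_def by blast
  define \<Omega> where "\<Omega> = (sample_space S K l :: (('v \<Rightarrow> 'f list) \<times> ('v \<Rightarrow> nat)) set)"
  define m0 where "m0 = (\<lambda>v. if v \<in> S then replicate l (0::'f) else [])"
  define k0 where "k0 = (\<lambda>v. if v \<in> S then (SOME x. x \<in> K v) else 0)"
  have k0K: "\<forall>\<sigma>\<in>S. k0 \<sigma> \<in> K \<sigma>" unfolding k0_def using A(1) by (simp add: some_in_eq)
  have om0: "(m0, k0) \<in> \<Omega>" unfolding \<Omega>_def sample_space_def m0_def using k0K by (auto simp: k0_def)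
  have ne: "\<Omega> \<noteq> {}" using om0 by blast
  have fin: "finite \<Omega>"
  proof -
    define Ll where "Ll = {xs :: 'f list. length xs = l}"
    have fLl: "finite Ll" unfolding Ll_def using finite_lists_length_eq[of "UNIV :: 'f set" l] by simp
    have fK: "finite (\<Union>\<sigma>\<in>S. K \<sigma>)" using finS A(1) by blast
    have "\<Omega> \<subseteq> {f. \<forall>x. (x \<in> S \<longrightarrow> f x \<in> Ll) \<and> (x \<notin> S \<longrightarrow> f x = [])} \<times>
               {f. \<forall>x. (x \<in> S \<longrightarrow> f x \<in> (\<Union>\<sigma>\<in>S. K \<sigma>)) \<and> (x \<notin> S \<longrightarrow> f x = 0)}"
      unfolding \<Omega>_def sample_space_def Ll_def by auto
    moreover have "finite ({f. \<forall>x. (x \<in> S \<longrightarrow> f x \<in> Ll) \<and> (x \<notin> S \<longrightarrow> f x = [])} \<times>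
               {f. \<forall>x. (x \<in> S \<longrightarrow> f x \<in> (\<Union>\<sigma>\<in>S. K \<sigma>)) \<and> (x \<notin> S \<longrightarrow> f x = 0)})"
      using finite_set_of_finite_funs[OF finS fLl] finite_set_of_finite_funs[OF finS fK] by blast
    ultimately show ?thesis using finite_subset by blast
  qed
  have MI: "prob_space.mutual_information (measure_pmf (pmf_of_set \<Omega>)) 2 (count_space UNIV) (count_space UNIV)
             (\<lambda>\<omega>. \<lambda>e. if e \<in> W then y e \<omega> else []) (\<lambda>\<omega>. fst \<omega>) = 0"
    using A(6) W(1) unfolding \<Omega>_def by blast
  have WE: "W \<subseteq> E" using W(1) unfolding W_r_def by blast
  show ?thesis
  proof (rule counting[where K=K and y=y and psi=psi and enc=enc and phi=phi and omz="(m0,k0)"])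
    show "\<And>\<omega> e. \<omega> \<in> sample_space S K l \<Longrightarrow> e \<in> E \<Longrightarrow> tlE e \<in> S \<Longrightarrow> y e \<omega> = enc e (fst \<omega> (tlE e)) (snd \<omega> (tlE e))"
      using A(2) by blast
    show "\<And>\<omega> e. \<omega> \<in> sample_space S K l \<Longrightarrow> e \<in> E \<Longrightarrow> tlE e \<notin> S \<Longrightarrow>
            y e \<omega> = phi e (\<lambda>d. if d \<in> in_edges E hdE (tlE e) then y d \<omega> else [])"
      using A(3) by blast
    show "\<And>\<omega> e. \<omega> \<in> sample_space S K l \<Longrightarrow> e \<in> E \<Longrightarrow> length (y e \<omega>) = n" using A(4) by blast
    show "\<And>\<omega>. \<omega> \<in> sample_space S K l \<Longrightarrow> psi (\<lambda>d. if d \<in> in_edges E hdE \<rho> then y d \<omega> else []) = vec_sum l S (fst \<omega>)"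
      using A(5) by blast
    show "W \<subseteq> E" "W \<noteq> {}" by (rule WE, rule W(2))
    show "Kc \<subseteq> E - W" "sep_nodes (E - W) tlE hdE Kc {\<rho>} (DS W)" by (rule Kc(1), rule Kc(2))
    show "(m0, k0) \<in> sample_space S K l" using om0 unfolding \<Omega>_def .
    fix m :: "'v \<Rightarrow> 'f list"
    assume m: "\<forall>\<sigma>\<in>S. length (m \<sigma>) = l" "\<forall>v. v \<notin> S \<longrightarrow> m v = []"
    have om2: "(m, k0) \<in> \<Omega>" unfolding \<Omega>_def sample_space_def using m k0K by (auto simp: k0_def)
    obtain \<omega> where \<omega>: "\<omega> \<in> \<Omega>" "(\<lambda>e. if e \<in> W then y e \<omega> else []) = (\<lambda>e. if e \<in> W then y e (m0, k0) else [])"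
      "fst \<omega> = fst (m, k0)"
      using mi_zero_support[OF fin ne MI om0 om2] by blast
    have "\<omega> = (m, snd \<omega>)" using \<omega>(3) by (cases \<omega>) simp
    moreover have "\<forall>e\<in>W. y e \<omega> = y e (m0, k0)"
    proof
      fix e assume "e \<in> W"
      then show "y e \<omega> = y e (m0, k0)" using fun_cong[OF \<omega>(2), of e] by simp
    qed
    ultimately show "\<exists>k. (m, k) \<in> sample_space S K l \<and> (\<forall>e\<in>W. y e (m, k) = y e (m0, k0))"
      using \<omega>(1) unfolding \<Omega>_def by metis
  qed
qed

end

theorem theorem9:
  fixes V :: "'v set" and E :: "'e set" and tlE hdE :: "'e \<Rightarrow> 'v" and S :: "'v set"
    and \<rho> :: 'v and r :: nat and F :: "'f::{finite,field} itself"
  assumes "network V E tlE hdE S \<rho>" and "1 \<le> r"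
  shows "(\<forall>R. achievable_rate E tlE hdE S \<rho> r F R \<longrightarrow>
            R \<le> real (Min {card (C_star E tlE hdE S \<rho> W) | W. W \<in> W'_r E tlE hdE S r}))
       \<and> Min {card (C_star E tlE hdE S \<rho> W) | W. W \<in> W'_r E tlE hdE S r}
         = Min {card C - card W | W C. W \<in> W_r E r \<and> C \<in> Lambda_set E tlE hdE S \<rho> \<and> W \<subseteq> C
                 \<and> D_set E tlE hdE S W \<subseteq> I_set E tlE hdE S \<rho> C}"
proof -
  interpret N: netw V E tlE hdE S \<rho> by unfold_locales (rule assms(1))
  have eq: "Min (N.Aset r) = Min (N.Bset r)" by (rule N.AB_eq[OF assms(2)])
  have "Min (N.Aset r) \<in> N.Aset r" by (rule Min_in[OF N.Aset_fin N.Aset_ne[OF assms(2)]])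
  then obtain W0 where W0: "W0 \<in> W'_r E tlE hdE S r" "Min (N.Aset r) = card (N.Cs W0)" by blast
  have W0r: "W0 \<in> W_r E r" "W0 \<noteq> {}" "W0 \<subseteq> E" using W0(1) unfolding W'_r_def W_r_def by auto
  have bound: "real l / real n \<le> real (card (N.Cs W0))" if "admissible_code E tlE hdE S \<rho> r F l n" for l n
  proof -
    have "l \<le> n * card (N.Cs W0)"
      by (rule N.code_bound[OF that W0r(1,2) N.Cs_props(1) N.Cs_props(2)])
    moreover have "0 < n" using that unfolding admissible_code_def by blast
    ultimately show ?thesis by (simp add: divide_le_eq) (metis of_nat_le_iff of_nat_mult mult.commute)
  qed
  have "R \<le> real (Min (N.Aset r))" if "achievable_rate E tlE hdE S \<rho> r F R" for R
  proof (rule ccontr)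
    assume "\<not> R \<le> real (Min (N.Aset r))"
    then have "R - real (Min (N.Aset r)) > 0" by simp
    with that obtain l n where ln: "admissible_code E tlE hdE S \<rho> r F l n"
      "real l / real n > R - (R - real (Min (N.Aset r)))" unfolding achievable_rate_def by blast
    from bound[OF ln(1)] ln(2) W0(2) show False by simp
  qed
  with eq show ?thesis by blast
qed


end
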